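(* Let $\mathbb{Y}=\sum_{(i,j)\in D_{\mathbb{X}}} m_{ij}P_{ij}$ be a fat point scheme in $\mathbb{P}^1\times\mathbb{P}^1$ over a field $K$ of characteristic zero with support $\mathbb{X}$. Then: (a) $\operatorname{HF}_{\Omega^1_{R_{\mathbb{Y}}/K}}(i,j)=0$ if $(i,j)\not\succeq(0,0)$ or $(i,j)=(0,0)$. (b) For $(i,j)\in\mathbb{N}^2$, if $\dim_K (I_{\mathbb{Y}})_{i,j}=0$, then $\operatorname{HF}_{\Omega^1_{R_{\mathbb{Y}}/K}}(i,j)=4ij+2i+2j$. (c) If $\operatorname{HF}_{\mathbb{Y}}(i_0-1,j_0)=\operatorname{HF}_{\mathbb{Y}}(i_0,j_0)=\operatorname{HF}_{\mathbb{Y}}(i_0,j_0-1)$, then for all $(i,j)\succeq(i_0,j_0)$ we have $\operatorname{HF}_{\Omega^1_{R_{\mathbb{Y}}/K}}(i,j)=5\operatorname{HF}_{\mathbb{Y}}(i,j)-\operatorname{HF}_{\mathbb{V}}(i,j)$, where $\mathbb{V}=\sum(m_{ij}+1)P_{ij}$ is the thickening of $\mathbb{Y}$.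
   Context: $S=K[X_0,X_1,Y_0,Y_1]$ with $\deg X_i=(1,0)$, $\deg Y_i=(0,1)$; $(a,b)\preceq(c,d)$ means $a\le c$ and $b\le d$. For a finite set $\mathbb{X}$ of distinct $K$-rational points of $\mathbb{P}^1\times\mathbb{P}^1$, $P_{ij}=Q_i\times R_j$, $D_{\mathbb{X}}=\{(i,j)\mid P_{ij}\in\mathbb{X}\}$, $\wp_{ij}$ its vanishing ideal; for positive integers $m_{ij}$, $I_{\mathbb{Y}}=\bigcap\wp_{ij}^{m_{ij}}$, $R_{\mathbb{Y}}=S/I_{\mathbb{Y}}$, $\operatorname{HF}_{\mathbb{Y}}(i,j)=\dim_K(R_{\mathbb{Y}})_{i,j}$. $\Omega^1_{R_{\mathbb{Y}}/K}$ is the bigraded module of Kähler differentials ($\deg dx_i=(1,0)$, $\deg dy_i=(0,1)$) and $\operatorname{HF}_M(i,j)=\dim_K M_{i,j}$. *)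

theory Defs
  imports Complex_Main "HOL-Library.Poly_Mapping" "HOL-Library.Function_Algebras"
begin

datatype var = X0 | X1 | Y0 | Y1

type_synonym 'k bipoly = "(var \<Rightarrow>\<^sub>0 nat) \<Rightarrow>\<^sub>0 'k"

definition bideg :: "(var \<Rightarrow>\<^sub>0 nat) \<Rightarrow> int \<times> int" where
  "bideg m = (int (Poly_Mapping.lookup m X0 + Poly_Mapping.lookup m X1), int (Poly_Mapping.lookup m Y0 + Poly_Mapping.lookup m Y1))"

text \<open>The homogeneous component S_{(i,j)} (zero for negative i or j).\<close>
definition bihom_part :: "int \<Rightarrow> int \<Rightarrow> 'k::zero bipoly set" where
  "bihom_part i j = {F. \<forall>m\<in>Poly_Mapping.keys F. bideg m = (i, j)}"

definition bihomogeneous :: "'k::zero bipoly \<Rightarrow> bool" where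
  "bihomogeneous F \<longleftrightarrow> (\<exists>i j. F \<in> bihom_part i j)"

definition psmult :: "'k::field \<Rightarrow> 'k bipoly \<Rightarrow> 'k bipoly" where
  "psmult c F = Poly_Mapping.map (\<lambda>x. c * x) F"

definition pdim :: "'k::field bipoly set \<Rightarrow> nat" where
  "pdim V = Vector_Spaces.vector_space.dim psmult V"

definition ideal_gen :: "'k::comm_ring_1 bipoly set \<Rightarrow> 'k bipoly set" where
  "ideal_gen G = {F. \<exists>A c. finite A \<and> A \<subseteq> G \<and> F = (\<Sum>g\<in>A. c g * g)}"

definition ideal_pow :: "'k::comm_ring_1 bipoly set \<Rightarrow> nat \<Rightarrow> 'k bipoly set" where
  "ideal_pow I m = ideal_gen {prod_list fs | fs. length fs = m \<and> set fs \<subseteq> I}"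

text \<open>A K-rational point of P^1 x P^1 given by homogeneous coordinates ([a0:a1],[b0:b1]).\<close>
type_synonym 'k pt = "('k \<times> 'k) \<times> ('k \<times> 'k)"

definition valid_pt :: "'k::field pt \<Rightarrow> bool" where
  "valid_pt P \<longleftrightarrow> fst P \<noteq> (0, 0) \<and> snd P \<noteq> (0, 0)"

definition proj_eq :: "'k::field \<times> 'k \<Rightarrow> 'k \<times> 'k \<Rightarrow> bool" where
  "proj_eq a b \<longleftrightarrow> fst a * snd b = snd a * fst b"

definition same_pt :: "'k::field pt \<Rightarrow> 'k pt \<Rightarrow> bool" where
  "same_pt P Q \<longleftrightarrow> proj_eq (fst P) (fst Q) \<and> proj_eq (snd P) (snd Q)"

definition peval :: "'k::comm_ring_1 bipoly \<Rightarrow> 'k pt \<Rightarrow> 'k" where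
  "peval F P = (\<Sum>m\<in>Poly_Mapping.keys F. Poly_Mapping.lookup F m * fst (fst P) ^ Poly_Mapping.lookup m X0 * snd (fst P) ^ Poly_Mapping.lookup m X1
                                      * fst (snd P) ^ Poly_Mapping.lookup m Y0 * snd (snd P) ^ Poly_Mapping.lookup m Y1)"

definition pt_ideal :: "'k::field pt \<Rightarrow> 'k bipoly set" where
  "pt_ideal P = ideal_gen {F. bihomogeneous F \<and> peval F P = 0}"

definition fat_ideal :: "'k::field pt set \<Rightarrow> ('k pt \<Rightarrow> nat) \<Rightarrow> 'k bipoly set" where
  "fat_ideal X m = (\<Inter>P\<in>X. ideal_pow (pt_ideal P) (m P))"

definition HF :: "'k::field bipoly set \<Rightarrow> int \<Rightarrow> int \<Rightarrow> nat" where
  "HF I i j = pdim (bihom_part i j :: 'k bipoly set) - pdim (I \<inter> bihom_part i j)"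

text \<open>Elements of the free S-module Omega_S = S dX0 + S dX1 + S dY0 + S dY1.\<close>
type_synonym 'k omega = "var \<Rightarrow> 'k bipoly"

definition vdeg :: "var \<Rightarrow> int \<times> int" where
  "vdeg v = (if v = X0 \<or> v = X1 then (1, 0) else (0, 1))"

definition omega_part :: "int \<Rightarrow> int \<Rightarrow> 'k::zero omega set" where
  "omega_part i j = {w. \<forall>v. w v \<in> bihom_part (i - fst (vdeg v)) (j - snd (vdeg v))}"

definition osmult :: "'k::field \<Rightarrow> 'k omega \<Rightarrow> 'k omega" where
  "osmult c w = (\<lambda>v. psmult c (w v))"

definition odim :: "'k::field omega set \<Rightarrow> nat" where
  "odim V = Vector_Spaces.vector_space.dim osmult V"

definition pderiv_var :: "var \<Rightarrow> 'k::comm_ring_1 bipoly \<Rightarrow> 'k bipoly" where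
  "pderiv_var v F = (\<Sum>m\<in>Poly_Mapping.keys F. Poly_Mapping.single (m - Poly_Mapping.single v 1)
                                      (of_nat (Poly_Mapping.lookup m v) * Poly_Mapping.lookup F m))"

definition dF :: "'k::comm_ring_1 bipoly \<Rightarrow> 'k omega" where
  "dF F = (\<lambda>v. pderiv_var v F)"

definition omod_gen :: "'k::comm_ring_1 omega set \<Rightarrow> 'k omega set" where
  "omod_gen G = {w. \<exists>A c. finite A \<and> A \<subseteq> G \<and> w = (\<lambda>v. \<Sum>g\<in>A. c g * g v)}"

text \<open>Relations: I Omega_S + S dI, so that Omega^1_{R/K} = Omega_S / kahler_rel I.\<close>
definition kahler_rel :: "'k::comm_ring_1 bipoly set \<Rightarrow> 'k omega set" where
  "kahler_rel I = omod_gen ({(\<lambda>v. if v = u then F else 0) | u F. F \<in> I} \<union> {dF F | F. F \<in> I})"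

definition HF_Omega :: "'k::field bipoly set \<Rightarrow> int \<Rightarrow> int \<Rightarrow> nat" where
  "HF_Omega I i j = odim (omega_part i j :: 'k omega set) - odim (kahler_rel I \<inter> omega_part i j)"

end

theory Submission
  imports Defs "HOL-Library.Product_Plus"
begin

abbreviation lk where "lk \<equiv> Poly_Mapping.lookup"
abbreviation kz where "kz \<equiv> Poly_Mapping.keys"
abbreviation sg where "sg \<equiv> Poly_Mapping.single"

lemma poly_expand: "(F::'a \<Rightarrow>\<^sub>0 'b::comm_monoid_add) = (\<Sum>m\<in>kz F. sg m (lk F m))"
proof (rule poly_mapping_eqI)
  fix k
  show "lk F k = lk (\<Sum>m\<in>kz F. sg m (lk F m)) k"
    by (simp add: lookup_sum lookup_single when_def in_keys_iff)
qed

lemma poly_induct[case_names zero single add]: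
  assumes "P 0" "\<And>m c. P (sg m c)" "\<And>F G. P F \<Longrightarrow> P G \<Longrightarrow> P (F + G)"
  shows "P (F::'a \<Rightarrow>\<^sub>0 'b::comm_monoid_add)"
proof -
  have "P (\<Sum>m\<in>A. sg m (lk F m))" if "finite A" for A
    using that by (induction A rule: finite_induct) (auto intro: assms)
  then show ?thesis by (metis poly_expand finite_keys)
qed

definition ev :: "var \<Rightarrow> (var \<Rightarrow>\<^sub>0 nat)" where "ev v = sg v 1"
definition Xv :: "var \<Rightarrow> 'k::comm_ring_1 bipoly" where "Xv v = sg (ev v) 1"

lemma lk_ev: "lk (ev v) u = (if u = v then 1 else 0)"
  by (simp add: ev_def lookup_single)

lemma pderiv_var_sum:
  assumes "finite A" "kz F \<subseteq> A"
  shows "pderiv_var v F = (\<Sum>m\<in>A. sg (m - ev v) (of_nat (lk m v) * lk F m))"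
  unfolding pderiv_var_def ev_def
  by (rule sum.mono_neutral_left) (use assms in \<open>auto simp: in_keys_iff\<close>)

lemma pderiv_var_zero[simp]: "pderiv_var v 0 = 0"
  by (simp add: pderiv_var_def)

lemma pderiv_var_add: "pderiv_var v (F + G) = pderiv_var v F + pderiv_var v G"
proof -
  let ?A = "kz F \<union> kz G"
  have fa: "finite ?A" by simp
  have "pderiv_var v (F + G) = (\<Sum>m\<in>?A. sg (m - ev v) (of_nat (lk m v) * lk (F+G) m))"
    by (rule pderiv_var_sum[OF fa]) (use keys_add[of F G] in blast)
  also have "\<dots> = (\<Sum>m\<in>?A. sg (m - ev v) (of_nat (lk m v) * lk F m)) + (\<Sum>m\<in>?A. sg (m - ev v) (of_nat (lk m v) * lk G m))"
    by (simp add: lookup_add distrib_left single_add sum.distrib)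
  also have "\<dots> = pderiv_var v F + pderiv_var v G"
    by (simp add: pderiv_var_sum[OF fa, symmetric])
  finally show ?thesis .
qed

lemma pderiv_var_single: "pderiv_var v (sg m c) = sg (m - ev v) (of_nat (lk m v) * c)"
  by (cases "c = 0") (simp_all add: pderiv_var_def ev_def)

lemma pderiv_var_uminus: "pderiv_var v (- F) = - pderiv_var v F"
proof -
  have "pderiv_var v (- F) + pderiv_var v F = 0"
    by (simp only: pderiv_var_add[symmetric] add.left_inverse pderiv_var_zero)
  then show ?thesis by (rule eq_neg_iff_add_eq_0[THEN iffD2])
qed

lemma pderiv_var_diff: "pderiv_var v (F - G) = pderiv_var v F - pderiv_var v G"
  by (simp only: diff_conv_add_uminus pderiv_var_add pderiv_var_uminus)

lemma pderiv_var_sumset: "pderiv_var v (\<Sum>a\<in>A. f a) = (\<Sum>a\<in>A. pderiv_var v (f a))"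
  by (induction A rule: infinite_finite_induct) (simp_all add: pderiv_var_add)

lemma ev_sub_add: "1 \<le> lk m v \<Longrightarrow> m - ev v + m2 = m + m2 - ev v"
  by (rule poly_mapping_eqI) (simp add: lookup_add lookup_minus lk_ev)

lemma ev_sub_add2: "1 \<le> lk m v \<Longrightarrow> m1 + (m - ev v) = m1 + m - ev v"
  by (rule poly_mapping_eqI) (simp add: lookup_add lookup_minus lk_ev)

lemma pderiv_single_mult:
  "pderiv_var v (sg m1 c1 * sg m2 c2) = pderiv_var v (sg m1 c1) * sg m2 c2 + sg m1 c1 * pderiv_var v (sg m2 c2)"
proof -
  have a: "sg (m1 + m2 - ev v) (of_nat (lk m1 v) * (c1 * c2)) = sg (m1 - ev v + m2) (of_nat (lk m1 v) * c1 * c2)"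
    by (cases "lk m1 v = 0") (simp_all add: ev_sub_add mult.assoc)
  have b: "sg (m1 + m2 - ev v) (of_nat (lk m2 v) * (c1 * c2)) = sg (m1 + (m2 - ev v)) (c1 * (of_nat (lk m2 v) * c2))"
    by (cases "lk m2 v = 0") (simp_all add: ev_sub_add2 mult.left_commute)
  show ?thesis
    by (simp add: pderiv_var_single mult_single lookup_add distrib_right single_add a b)
qed

lemma pderiv_var_mult: "pderiv_var v ((F::'k::comm_ring_1 bipoly) * G) = pderiv_var v F * G + F * pderiv_var v G"
proof (induction F rule: poly_induct)
  case zero then show ?case by simp
next
  case (single m c)
  show ?case
  proof (induction G rule: poly_induct)
    case zero then show ?case by simp
  next
    case (single m' c') then show ?case by (rule pderiv_single_mult)
  next
    case (add F G) then show ?case by (simp add: distrib_left distrib_right pderiv_var_add)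
  qed
next
  case (add F G) then show ?case by (simp add: distrib_left distrib_right pderiv_var_add)
qed

definition mon :: "(var \<Rightarrow>\<^sub>0 nat) \<Rightarrow> 'k::comm_ring_1 pt \<Rightarrow> 'k" where
  "mon m P = fst (fst P) ^ lk m X0 * snd (fst P) ^ lk m X1 * fst (snd P) ^ lk m Y0 * snd (snd P) ^ lk m Y1"

lemma peval_sum:
  assumes "finite A" "kz F \<subseteq> A"
  shows "peval F P = (\<Sum>m\<in>A. lk F m * mon m P)"
  unfolding peval_def mon_def
  by (rule sum.mono_neutral_cong_left) (use assms in \<open>auto simp: in_keys_iff mult.assoc\<close>)

lemma peval_zero[simp]: "peval 0 P = 0"
  by (simp add: peval_def)

lemma peval_add: "peval (F + G) P = peval F P + peval G P"
proof -
  let ?A = "kz F \<union> kz G"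
  have fa: "finite ?A" by simp
  have "peval (F + G) P = (\<Sum>m\<in>?A. lk (F+G) m * mon m P)"
    by (rule peval_sum[OF fa]) (use keys_add[of F G] in blast)
  also have "\<dots> = (\<Sum>m\<in>?A. lk F m * mon m P) + (\<Sum>m\<in>?A. lk G m * mon m P)"
    by (simp add: lookup_add distrib_right sum.distrib)
  also have "\<dots> = peval F P + peval G P"
    by (simp add: peval_sum[OF fa, symmetric])
  finally show ?thesis .
qed

lemma peval_single: "peval (sg m c) P = c * mon m P"
  by (cases "c = 0") (simp_all add: peval_def mon_def mult.assoc)

lemma mon_add: "mon (m1 + m2) P = mon m1 P * mon m2 P"
  by (simp add: mon_def lookup_add power_add mult_ac)

lemma peval_uminus: "peval (- F) P = - peval F P"
proof -
  have "peval (- F) P + peval F P = 0"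
    by (simp only: peval_add[symmetric] add.left_inverse peval_zero)
  then show ?thesis by (rule eq_neg_iff_add_eq_0[THEN iffD2])
qed

lemma peval_diff: "peval (F - G) P = peval F P - peval G P"
  by (simp only: diff_conv_add_uminus peval_add peval_uminus)

lemma peval_mult: "peval ((F::'k::comm_ring_1 bipoly) * G) P = peval F P * peval G P"
proof (induction F rule: poly_induct)
  case zero then show ?case by simp
next
  case (single m c)
  show ?case
  proof (induction G rule: poly_induct)
    case zero then show ?case by simp
  next
    case (single m' c') then show ?case by (simp add: mult_single peval_single mon_add mult_ac)
  next
    case (add F G) then show ?case by (simp add: distrib_left peval_add)
  qed
next
  case (add F G) then show ?case by (simp add: distrib_right peval_add)
qed

lemma peval_one[simp]: "peval 1 P = 1"
  by (metis single_one peval_single mon_def lookup_zero power_0 mult_1 mult_1_right)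

lemma psmult_conv: "psmult c F = sg 0 c * F"
  by (simp add: psmult_def mult_map_scale_conv_mult)

lemma lookup_psmult[simp]: "lk (psmult c F) n = c * lk F n"
  by (simp add: psmult_def Poly_Mapping.map.rep_eq when_def)


lemma sub_ev_iff: "1 \<le> lk m v \<Longrightarrow> (m - ev v = n) = (n + ev v = m)"
  unfolding poly_mapping_eq_iff fun_eq_iff
  by (auto simp: lookup_add lookup_minus lk_ev)

lemma lookup_pderiv: "lk (pderiv_var v (F::'k::comm_ring_1 bipoly)) n = of_nat (lk n v + 1) * lk F (n + ev v)"
proof (induction F rule: poly_induct)
  case zero then show ?case by simp
next
  case (single m c)
  show ?case
  proof (cases "lk m v = 0")
    case True
    then have "n + ev v \<noteq> m" by (auto simp: poly_mapping_eq_iff fun_eq_iff lookup_add lk_ev)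
    then show ?thesis using True by (simp add: pderiv_var_single lookup_single when_def)
  next
    case False
    then have 1: "1 \<le> lk m v" by simp
    have "n + ev v = m \<Longrightarrow> (of_nat (lk m v) :: 'k) = of_nat (lk n v + 1)" by (auto simp: lookup_add lk_ev)
    then show ?thesis using sub_ev_iff[OF 1, of n]
      by (auto simp: pderiv_var_single lookup_single when_def simp del: of_nat_add)
  qed
next
  case (add F G) then show ?case by (simp add: pderiv_var_add lookup_add distrib_left)
qed

lemma pderiv_comm: "pderiv_var u (pderiv_var v F) = pderiv_var v (pderiv_var u F)"
proof (rule poly_mapping_eqI)
  fix n
  show "lk (pderiv_var u (pderiv_var v F)) n = lk (pderiv_var v (pderiv_var u F)) n"
    by (cases "u = v") (simp_all add: lookup_pderiv lookup_add lk_ev add.commute add.left_commute mult.left_commute)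
qed

lemma bideg_add: "bideg (a + b) = (fst (bideg a) + fst (bideg b), snd (bideg a) + snd (bideg b))"
  by (simp add: bideg_def lookup_add)

lemma bideg_ev: "bideg (ev v) = vdeg v"
  by (cases v) (simp_all add: bideg_def vdeg_def lk_ev)

lemma bideg_nonneg: "0 \<le> fst (bideg m)" "0 \<le> snd (bideg m)"
  by (simp_all add: bideg_def)

lemma bihom_part_iff: "F \<in> bihom_part i j \<longleftrightarrow> (\<forall>n. lk F n \<noteq> 0 \<longrightarrow> bideg n = (i, j))"
  by (auto simp: bihom_part_def in_keys_iff)

lemma bihom_zero[simp]: "0 \<in> bihom_part i j"
  by (simp add: bihom_part_def)

lemma bihom_add: "F \<in> bihom_part i j \<Longrightarrow> G \<in> bihom_part i j \<Longrightarrow> F + G \<in> bihom_part i j"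
  unfolding bihom_part_iff lookup_add by (metis add.left_neutral add.right_neutral)

lemma bihom_uminus: "F \<in> bihom_part i j \<Longrightarrow> - F \<in> bihom_part i j"
  by (auto simp: bihom_part_iff)

lemma bihom_diff: "(F::'k::ab_group_add bipoly) \<in> bihom_part i j \<Longrightarrow> G \<in> bihom_part i j \<Longrightarrow> F - G \<in> bihom_part i j"
  unfolding diff_conv_add_uminus by (intro bihom_add bihom_uminus)

lemma bihom_psmult: "F \<in> bihom_part i j \<Longrightarrow> psmult c F \<in> bihom_part i j"
  by (auto simp: bihom_part_iff)

lemma bihom_sum: "(\<And>a. a \<in> A \<Longrightarrow> f a \<in> bihom_part i j) \<Longrightarrow> sum f A \<in> bihom_part i j"
  by (induction A rule: infinite_finite_induct) (auto intro: bihom_add)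

lemma bihom_mult: "F \<in> bihom_part i j \<Longrightarrow> G \<in> bihom_part k l \<Longrightarrow> (F * G :: 'k::comm_ring_1 bipoly) \<in> bihom_part (i + k) (j + l)"
  unfolding bihom_part_def using keys_mult[of F G] by (force simp: bideg_add)

lemma bihom_neg: "i < 0 \<or> j < 0 \<Longrightarrow> bihom_part i j = {0}"
proof -
  assume a: "i < 0 \<or> j < 0"
  have "F = 0" if "F \<in> bihom_part i j" for F :: "'a bipoly"
  proof (rule poly_mapping_eqI)
    fix n show "lk F n = lk 0 n"
      using that a bideg_nonneg[of n] by (auto simp: bihom_part_iff)
  qed
  then show ?thesis by auto
qed

lemma bihom_pderiv:
  assumes "F \<in> bihom_part i j"
  shows "pderiv_var v F \<in> bihom_part (i - fst (vdeg v)) (j - snd (vdeg v))"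
  unfolding bihom_part_iff
proof (intro allI impI)
  fix n assume "lk (pderiv_var v F) n \<noteq> 0"
  then have "lk F (n + ev v) \<noteq> 0" by (auto simp: lookup_pderiv)
  then have "bideg (n + ev v) = (i, j)" using assms by (simp add: bihom_part_iff)
  then show "bideg n = (i - fst (vdeg v), j - snd (vdeg v))"
    by (simp add: bideg_add bideg_ev prod_eq_iff)
qed

lemma Xv_bihom: "Xv v \<in> bihom_part (fst (vdeg v)) (snd (vdeg v))"
  by (simp add: Xv_def bihom_part_def bideg_ev)

lemma bihom_00: "F \<in> bihom_part 0 0 \<Longrightarrow> F = sg 0 (lk F 0)"
proof (rule poly_mapping_eqI)
  fix n assume F: "F \<in> bihom_part 0 0"
  show "lk F n = lk (sg 0 (lk F 0)) n"
  proof (cases "n = 0")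
    case False
    then have "\<exists>v. lk n v \<noteq> 0" by (auto simp: poly_mapping_eq_iff fun_eq_iff)
    then obtain v where "lk n v \<noteq> 0" by blast
    then have "bideg n \<noteq> (0, 0)" by (cases v) (auto simp: bideg_def)
    then show ?thesis using F False by (auto simp: bihom_part_iff lookup_single when_def)
  qed simp
qed

definition comp :: "int \<Rightarrow> int \<Rightarrow> 'k::zero bipoly \<Rightarrow> 'k bipoly" where
  "comp i j F = Abs_poly_mapping (\<lambda>n. if bideg n = (i, j) then lk F n else 0)"

lemma lookup_comp: "lk (comp i j F) n = (if bideg n = (i, j) then lk F n else 0)"
proof -
  have "finite {n. (if bideg n = (i, j) then lk F n else 0) \<noteq> 0}"
    by (rule finite_subset[of _ "kz F"]) (auto simp: in_keys_iff)
  then show ?thesis by (simp add: comp_def)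
qed

lemma comp_bihom: "comp i j F \<in> bihom_part i j"
  by (simp add: bihom_part_iff lookup_comp)

lemma comp_id: "F \<in> bihom_part i j \<Longrightarrow> comp i j F = F"
  by (rule poly_mapping_eqI) (auto simp: lookup_comp bihom_part_iff)

lemma comp_other: "F \<in> bihom_part i j \<Longrightarrow> (k, l) \<noteq> (i, j) \<Longrightarrow> comp k l F = 0"
  by (rule poly_mapping_eqI) (auto simp: lookup_comp bihom_part_iff)

lemma comp_add: "comp i j (F + G) = comp i j F + comp i j (G :: 'k::comm_monoid_add bipoly)"
  by (rule poly_mapping_eqI) (simp add: lookup_comp lookup_add)

lemma comp_uminus: "comp i j (- F) = - comp i j (F :: 'k::ab_group_add bipoly)"
  by (rule poly_mapping_eqI) (simp add: lookup_comp)

lemma comp_diff: "comp i j (F - G) = comp i j F - comp i j (G :: 'k::ab_group_add bipoly)"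
  by (rule poly_mapping_eqI) (simp add: lookup_comp lookup_minus)

lemma comp_zero[simp]: "comp i j 0 = 0"
  by (rule poly_mapping_eqI) (simp add: lookup_comp)

lemma comp_sum: "comp i j (sum f A) = (\<Sum>a\<in>A. comp i j (f a :: 'k::comm_monoid_add bipoly))"
  by (induction A rule: infinite_finite_induct) (simp_all add: comp_add)

lemma comp_mult:
  assumes G: "G \<in> bihom_part a b"
  shows "comp i j (c * G) = comp (i - a) (j - b) c * (G :: 'k::comm_ring_1 bipoly)"
proof -
  let ?c0 = "comp (i - a) (j - b) c"
  let ?r = "c - ?c0"
  have r: "lk ?r n = 0" if "bideg n = (i - a, j - b)" for n
    using that by (simp add: lookup_minus lookup_comp)
  have "comp i j (?r * G) = 0"
  proof (rule poly_mapping_eqI)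
    fix n
    show "lk (comp i j (?r * G)) n = lk 0 n"
    proof (cases "bideg n = (i, j)")
      case True
      have "n \<notin> kz (?r * G)"
      proof
        assume "n \<in> kz (?r * G)"
        then obtain k l where kl: "n = k + l" "k \<in> kz ?r" "l \<in> kz G" using keys_mult by blast
        then have "bideg l = (a, b)" using G by (auto simp: bihom_part_def)
        then have "bideg k = (i - a, j - b)" using True kl(1) by (auto simp: bideg_add prod_eq_iff)
        then show False using kl(2) r by (simp add: in_keys_iff)
      qed
      then show ?thesis by (simp add: lookup_comp in_keys_iff)
    qed (simp add: lookup_comp)
  qed
  moreover have "comp i j (?c0 * G) = ?c0 * G"
    using bihom_mult[OF comp_bihom[of "i - a" "j - b" c] G] by (intro comp_id) simp
  moreover have "c * G = ?c0 * G + ?r * G" by (simp add: algebra_simps)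
  ultimately show ?thesis by (simp add: comp_add)
qed

lemma comp_pderiv:
  "comp (i - fst (vdeg v)) (j - snd (vdeg v)) (pderiv_var v F) = pderiv_var v (comp i j F)"
  by (rule poly_mapping_eqI) (auto simp: lookup_comp lookup_pderiv bideg_add bideg_ev prod_eq_iff)


lemma lookup_Xv_pderiv: "lk (Xv v * pderiv_var v F) n = of_nat (lk n v) * lk (F :: 'k::comm_ring_1 bipoly) n"
proof (induction F arbitrary: n rule: poly_induct)
  case zero then show ?case by simp
next
  case (single m c)
  show ?case
  proof (cases "lk m v = 0")
    case True
    then show ?thesis by (auto simp: Xv_def pderiv_var_single mult_single lookup_single when_def)
  next
    case False
    then have "ev v + (m - ev v) = m"
      by (rule_tac poly_mapping_eqI) (simp add: lookup_add lookup_minus lk_ev)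
    then show ?thesis by (auto simp: Xv_def pderiv_var_single mult_single lookup_single when_def)
  qed
next
  case (add F G) then show ?case by (simp add: pderiv_var_add lookup_add distrib_left)
qed

lemma euler_X:
  assumes "F \<in> bihom_part i j"
  shows "Xv X0 * pderiv_var X0 F + Xv X1 * pderiv_var X1 F = psmult (of_int i) (F :: 'k::field bipoly)"
proof (rule poly_mapping_eqI)
  fix n
  show "lk (Xv X0 * pderiv_var X0 F + Xv X1 * pderiv_var X1 F) n = lk (psmult (of_int i) F) n"
  proof (cases "lk F n = 0")
    case False
    then have "bideg n = (i, j)" using assms by (simp add: bihom_part_iff)
    then have "int (lk n X0 + lk n X1) = i" by (simp add: bideg_def)
    then have "(of_nat (lk n X0) + of_nat (lk n X1) :: 'k) = of_int i"
      by (metis of_int_of_nat_eq of_nat_add)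
    then show ?thesis by (simp add: lookup_add lookup_Xv_pderiv distrib_right[symmetric])
  qed (simp add: lookup_add lookup_Xv_pderiv)
qed

lemma euler_Y:
  assumes "F \<in> bihom_part i j"
  shows "Xv Y0 * pderiv_var Y0 F + Xv Y1 * pderiv_var Y1 F = psmult (of_int j) (F :: 'k::field bipoly)"
proof (rule poly_mapping_eqI)
  fix n
  show "lk (Xv Y0 * pderiv_var Y0 F + Xv Y1 * pderiv_var Y1 F) n = lk (psmult (of_int j) F) n"
  proof (cases "lk F n = 0")
    case False
    then have "bideg n = (i, j)" using assms by (simp add: bihom_part_iff)
    then have "int (lk n Y0 + lk n Y1) = j" by (simp add: bideg_def)
    then have "(of_nat (lk n Y0) + of_nat (lk n Y1) :: 'k) = of_int j"
      by (metis of_int_of_nat_eq of_nat_add)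
    then show ?thesis by (simp add: lookup_add lookup_Xv_pderiv distrib_right[symmetric])
  qed (simp add: lookup_add lookup_Xv_pderiv)
qed

lemma peval_Xv: "peval (Xv X0) P = fst (fst P)" "peval (Xv X1) P = snd (fst P)"
   "peval (Xv Y0) P = fst (snd P)" "peval (Xv Y1) P = snd (snd P)"
  by (simp_all add: Xv_def peval_single mon_def lk_ev)

lemma peval_psmult: "peval (psmult c F) P = c * peval F P"
  by (simp add: psmult_conv peval_mult peval_single mon_def)

lemma euler_X_eval:
  assumes "F \<in> bihom_part i j"
  shows "fst (fst P) * peval (pderiv_var X0 F) P + snd (fst P) * peval (pderiv_var X1 F) P = of_int i * peval (F :: 'k::field bipoly) P"
  using arg_cong[OF euler_X[OF assms], of "\<lambda>G. peval G P"]
  by (simp add: peval_add peval_mult peval_Xv peval_psmult)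

lemma euler_Y_eval:
  assumes "F \<in> bihom_part i j"
  shows "fst (snd P) * peval (pderiv_var Y0 F) P + snd (snd P) * peval (pderiv_var Y1 F) P = of_int j * peval (F :: 'k::field bipoly) P"
  using arg_cong[OF euler_Y[OF assms], of "\<lambda>G. peval G P"]
  by (simp add: peval_add peval_mult peval_Xv peval_psmult)

fun derivs :: "var list \<Rightarrow> 'k::comm_ring_1 bipoly \<Rightarrow> 'k bipoly" where
  "derivs [] F = F"
| "derivs (v # vs) F = derivs vs (pderiv_var v F)"

definition Dm :: "'k::comm_ring_1 pt \<Rightarrow> nat \<Rightarrow> 'k bipoly set" where
  "Dm P m = {F. \<forall>vs. length vs < m \<longrightarrow> peval (derivs vs F) P = 0}"

lemma Dm_0[simp]: "Dm P 0 = UNIV"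
  by (simp add: Dm_def)

lemma Dm_Suc: "F \<in> Dm P (Suc k) \<longleftrightarrow> peval F P = 0 \<and> (\<forall>v. pderiv_var v F \<in> Dm P k)"
proof
  assume "F \<in> Dm P (Suc k)"
  then show "peval F P = 0 \<and> (\<forall>v. pderiv_var v F \<in> Dm P k)"
    unfolding Dm_def by (auto dest: spec[of _ "[]"] spec[of _ "_ # _"])
next
  assume a: "peval F P = 0 \<and> (\<forall>v. pderiv_var v F \<in> Dm P k)"
  show "F \<in> Dm P (Suc k)" unfolding Dm_def
  proof (intro CollectI allI impI)
    fix vs :: "var list" assume "length vs < Suc k"
    then show "peval (derivs vs F) P = 0" using a by (cases vs) (auto simp: Dm_def)
  qed
qed

lemma Dm_mono: "k \<le> m \<Longrightarrow> Dm P m \<subseteq> Dm P k"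
  by (auto simp: Dm_def)

lemma derivs_add: "derivs vs (F + G) = derivs vs F + derivs vs G"
  by (induction vs arbitrary: F G) (simp_all add: pderiv_var_add)

lemma derivs_zero[simp]: "derivs vs 0 = 0"
  by (induction vs) simp_all

lemma derivs_uminus: "derivs vs (- F) = - derivs vs F"
  by (induction vs arbitrary: F) (simp_all add: pderiv_var_uminus)

lemma derivs_diff: "derivs vs (F - G) = derivs vs F - derivs vs G"
  by (induction vs arbitrary: F G) (simp_all add: pderiv_var_diff)

lemma derivs_pderiv: "derivs vs (pderiv_var v F) = pderiv_var v (derivs vs F)"
proof (induction vs arbitrary: F)
  case (Cons a vs)
  have "derivs (a # vs) (pderiv_var v F) = derivs vs (pderiv_var v (pderiv_var a F))"
    by (simp only: derivs.simps pderiv_comm[of a v F])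
  also have "\<dots> = pderiv_var v (derivs (a # vs) F)" by (simp only: Cons derivs.simps)
  finally show ?case .
qed simp

lemma Dm_zero[simp]: "0 \<in> Dm P m"
  by (simp add: Dm_def)

lemma Dm_add: "F \<in> Dm P m \<Longrightarrow> G \<in> Dm P m \<Longrightarrow> F + G \<in> Dm P m"
  by (simp add: Dm_def derivs_add peval_add)

lemma Dm_uminus: "F \<in> Dm P m \<Longrightarrow> - F \<in> Dm P m"
  by (simp add: Dm_def derivs_uminus peval_uminus)

lemma Dm_diff: "F \<in> Dm P m \<Longrightarrow> G \<in> Dm P m \<Longrightarrow> F - G \<in> Dm P m"
  by (simp add: Dm_def derivs_diff peval_diff)

lemma Dm_mult_aux: "a + b = n \<Longrightarrow> F \<in> Dm P a \<Longrightarrow> G \<in> Dm P b \<Longrightarrow> F * G \<in> Dm P n"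
proof (induction n arbitrary: a b F G)
  case 0 then show ?case by simp
next
  case (Suc k)
  have ev: "peval (F * G) P = 0"
  proof (cases a)
    case 0
    then obtain b' where "b = Suc b'" using Suc.prems by (cases b) auto
    then have "peval G P = 0" using Suc.prems by (simp add: Dm_Suc)
    then show ?thesis by (simp add: peval_mult)
  next
    case (Suc a')
    then have "peval F P = 0" using Suc.prems by (simp add: Dm_Suc)
    then show ?thesis by (simp add: peval_mult)
  qed
  have "pderiv_var v F * G \<in> Dm P k" for v
  proof (cases a)
    case 0
    then obtain b' where b: "b = Suc b'" "b' = k" using Suc.prems by (cases b) auto
    have "G \<in> Dm P b'" using Suc.prems(3) b Dm_mono[of b' b P] by auto
    then show ?thesis using Suc.IH[of 0 b'] b by simp
  next
    case (Suc a')
    then have "pderiv_var v F \<in> Dm P a'" using \<open>F \<in> Dm P a\<close> by (simp add: Dm_Suc)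
    then show ?thesis using Suc.IH[of a' b] Suc.prems Suc by simp
  qed
  moreover have "F * pderiv_var v G \<in> Dm P k" for v
  proof (cases b)
    case 0
    then obtain a' where a: "a = Suc a'" "a' = k" using Suc.prems by (cases a) auto
    have "F \<in> Dm P a'" using Suc.prems(2) a Dm_mono[of a' a P] by auto
    then show ?thesis using Suc.IH[of a' 0] a by simp
  next
    case (Suc b')
    then have "pderiv_var v G \<in> Dm P b'" using \<open>G \<in> Dm P b\<close> by (simp add: Dm_Suc)
    then show ?thesis using Suc.IH[of a b'] Suc.prems Suc by simp
  qed
  ultimately show ?case using ev by (simp add: Dm_Suc pderiv_var_mult Dm_add)
qed

lemma Dm_mult: "F \<in> Dm P a \<Longrightarrow> G \<in> Dm P b \<Longrightarrow> F * G \<in> Dm P (a + b)"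
  using Dm_mult_aux by blast

lemma Dm_mult_left: "G \<in> Dm P b \<Longrightarrow> F * G \<in> Dm P b"
  using Dm_mult[of F P 0 G b] by simp

lemma derivs_bihom: "F \<in> bihom_part i j \<Longrightarrow> \<exists>i' j'. derivs vs F \<in> bihom_part i' j'"
proof (induction vs arbitrary: F i j)
  case (Cons v vs)
  show ?case using Cons.IH[OF bihom_pderiv[OF Cons.prems, of v]] by simp
qed auto


definition isideal :: "'k::comm_ring_1 bipoly set \<Rightarrow> bool" where
  "isideal J \<longleftrightarrow> 0 \<in> J \<and> (\<forall>a b. a \<in> J \<longrightarrow> b \<in> J \<longrightarrow> a + b \<in> J) \<and> (\<forall>c a. a \<in> J \<longrightarrow> c * a \<in> J)"

lemma isidealI: "0 \<in> J \<Longrightarrow> (\<And>a b. a \<in> J \<Longrightarrow> b \<in> J \<Longrightarrow> a + b \<in> J) \<Longrightarrow> (\<And>c a. a \<in> J \<Longrightarrow> c * a \<in> J) \<Longrightarrow> isideal J"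
  by (simp add: isideal_def)

lemma isideal_0: "isideal J \<Longrightarrow> 0 \<in> J" by (simp add: isideal_def)
lemma isideal_add: "isideal J \<Longrightarrow> a \<in> J \<Longrightarrow> b \<in> J \<Longrightarrow> a + b \<in> J" by (simp add: isideal_def)
lemma isideal_mult: "isideal J \<Longrightarrow> a \<in> J \<Longrightarrow> c * a \<in> J" by (simp add: isideal_def)
lemma isideal_uminus: "isideal J \<Longrightarrow> a \<in> J \<Longrightarrow> - a \<in> J"
  using isideal_mult[of J a "-1"] by simp
lemma isideal_diff: "isideal J \<Longrightarrow> a \<in> J \<Longrightarrow> b \<in> J \<Longrightarrow> a - b \<in> J"
  by (metis diff_conv_add_uminus isideal_add isideal_uminus)
lemma isideal_psmult: "isideal J \<Longrightarrow> a \<in> J \<Longrightarrow> psmult c a \<in> J"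
  by (simp add: psmult_conv isideal_mult)
lemma isideal_sum: "isideal J \<Longrightarrow> (\<And>x. x \<in> A \<Longrightarrow> f x \<in> J) \<Longrightarrow> sum f A \<in> J"
  by (induction A rule: infinite_finite_induct) (auto intro: isideal_add isideal_0)

lemma isideal_Inter: "(\<And>P. P \<in> X \<Longrightarrow> isideal (J P)) \<Longrightarrow> isideal (\<Inter>P\<in>X. J P)"
  by (auto simp: isideal_def)

lemma sum_extend:
  assumes "finite B" "A \<subseteq> B"
  shows "(\<Sum>g\<in>A. c g * g) = (\<Sum>g\<in>B. (if g \<in> A then c g else 0) * (g :: 'a::comm_ring_1))"
  by (rule sum.mono_neutral_cong_left) (use assms in auto)

lemma ideal_gen_isideal: "isideal (ideal_gen G)"
proof (rule isidealI)
  show "0 \<in> ideal_gen G" unfolding ideal_gen_def by (rule CollectI, rule exI[of _ "{}"]) auto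
next
  fix a b assume "a \<in> ideal_gen G" "b \<in> ideal_gen G"
  then obtain A c B d where A: "finite A" "A \<subseteq> G" "a = (\<Sum>g\<in>A. c g * g)"
    and B: "finite B" "B \<subseteq> G" "b = (\<Sum>g\<in>B. d g * g)" by (auto simp: ideal_gen_def)
  let ?e = "\<lambda>g. (if g \<in> A then c g else 0) + (if g \<in> B then d g else 0)"
  have fab: "finite (A \<union> B)" using A B by simp
  have 1: "a = (\<Sum>g\<in>A \<union> B. (if g \<in> A then c g else 0) * g)"
    unfolding A(3) by (rule sum_extend[OF fab]) simp
  have 2: "b = (\<Sum>g\<in>A \<union> B. (if g \<in> B then d g else 0) * g)"
    unfolding B(3) by (rule sum_extend[OF fab]) simp
  have "a + b = (\<Sum>g\<in>A \<union> B. ?e g * g)"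
    unfolding 1 2 sum.distrib[symmetric] distrib_right ..
  then show "a + b \<in> ideal_gen G" unfolding ideal_gen_def
    by (intro CollectI exI[of _ "A \<union> B"] exI[of _ ?e]) (use A B in simp)
next
  fix c a assume "a \<in> ideal_gen G"
  then obtain A d where A: "finite A" "A \<subseteq> G" "a = (\<Sum>g\<in>A. d g * g)" by (auto simp: ideal_gen_def)
  have "c * a = (\<Sum>g\<in>A. (c * d g) * g)" using A by (simp add: sum_distrib_left mult.assoc)
  then show "c * a \<in> ideal_gen G" unfolding ideal_gen_def
    by (intro CollectI exI[of _ A] exI[of _ "\<lambda>g. c * d g"]) (use A in simp)
qed

lemma ideal_gen_base: "g \<in> G \<Longrightarrow> g \<in> ideal_gen G"
  unfolding ideal_gen_def by (rule CollectI, rule exI[of _ "{g}"], rule exI[of _ "\<lambda>_. 1"]) simp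

lemma ideal_gen_least:
  assumes "G \<subseteq> J" "isideal J"
  shows "ideal_gen G \<subseteq> J"
proof
  fix a assume "a \<in> ideal_gen G"
  then obtain A d where A: "finite A" "A \<subseteq> G" "a = (\<Sum>g\<in>A. d g * g)" by (auto simp: ideal_gen_def)
  show "a \<in> J" unfolding A(3) using A assms by (intro isideal_sum) (auto intro: isideal_mult)
qed

lemma ideal_pow_isideal: "isideal (ideal_pow I m)"
  by (simp add: ideal_pow_def ideal_gen_isideal)

lemma pt_ideal_isideal: "isideal (pt_ideal P)"
  by (simp add: pt_ideal_def ideal_gen_isideal)

lemma fat_ideal_isideal: "isideal (fat_ideal X m)"
  unfolding fat_ideal_def by (intro isideal_Inter ideal_pow_isideal)

lemma comp_ideal_gen:
  assumes "\<forall>h\<in>H. bihomogeneous h" "F \<in> ideal_gen H"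
  shows "comp i j F \<in> ideal_gen H"
proof -
  obtain A d where A: "finite A" "A \<subseteq> H" "F = (\<Sum>g\<in>A. d g * g)" using assms(2) by (auto simp: ideal_gen_def)
  have "comp i j (d g * g) \<in> ideal_gen H" if gA: "g \<in> A" for g
  proof -
    obtain a b where "g \<in> bihom_part a b" using assms(1) A(2) gA unfolding bihomogeneous_def by blast
    then have "comp i j (d g * g) = comp (i - a) (j - b) (d g) * g" by (rule comp_mult)
    moreover have "g \<in> ideal_gen H" using A(2) gA by (intro ideal_gen_base) blast
    ultimately show ?thesis by (simp add: isideal_mult[OF ideal_gen_isideal])
  qed
  then show ?thesis unfolding A(3) comp_sum by (intro isideal_sum[OF ideal_gen_isideal])
qed

definition genP :: "'k::field pt \<Rightarrow> 'k bipoly set" where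
  "genP P = {F. bihomogeneous F \<and> peval F P = 0}"

definition Hm :: "'k::field pt \<Rightarrow> nat \<Rightarrow> 'k bipoly set" where
  "Hm P m = {prod_list fs | fs. length fs = m \<and> set fs \<subseteq> genP P}"

lemma pt_ideal_genP: "pt_ideal P = ideal_gen (genP P)"
  by (simp add: pt_ideal_def genP_def)

lemma prod_list_bihom: "set fs \<subseteq> {F. bihomogeneous F} \<Longrightarrow> bihomogeneous (prod_list (fs :: 'k::comm_ring_1 bipoly list))"
proof (induction fs)
  case Nil
  have "(1 :: 'k bipoly) \<in> bihom_part 0 0" by (simp add: bihom_part_def bideg_def flip: single_one)
  then show ?case by (auto simp: bihomogeneous_def)
next
  case (Cons f fs)
  then show ?case by (auto simp: bihomogeneous_def intro: bihom_mult)
qed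

lemma Hm_bihom: "\<forall>h\<in>Hm P m. bihomogeneous h"
  by (auto simp: Hm_def genP_def intro!: prod_list_bihom)

lemma mult_gen_closed:
  assumes "x \<in> ideal_gen G" "y \<in> ideal_gen H" "\<And>g h. g \<in> G \<Longrightarrow> h \<in> H \<Longrightarrow> g * h \<in> J" "isideal J"
  shows "x * y \<in> J"
proof -
  have "G \<subseteq> {x. \<forall>y\<in>ideal_gen H. x * y \<in> J}"
  proof
    fix g assume g: "g \<in> G"
    have "ideal_gen H \<subseteq> {y. g * y \<in> J}"
    proof (rule ideal_gen_least)
      show "H \<subseteq> {y. g * y \<in> J}" using assms(3) g by auto
      show "isideal {y. g * y \<in> J}"
        by (rule isidealI) (use assms(4) in \<open>auto simp: distrib_left mult.left_commute intro: isideal_0 isideal_add isideal_mult\<close>)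
    qed
    then show "g \<in> {x. \<forall>y\<in>ideal_gen H. x * y \<in> J}" by auto
  qed
  moreover have "isideal {x. \<forall>y\<in>ideal_gen H. x * y \<in> J}"
    by (rule isidealI) (use assms(4) in \<open>auto simp: distrib_right mult.assoc intro: isideal_0 isideal_add isideal_mult\<close>)
  ultimately have "ideal_gen G \<subseteq> {x. \<forall>y\<in>ideal_gen H. x * y \<in> J}" by (rule ideal_gen_least)
  then show ?thesis using assms(1,2) by auto
qed

lemma prod_in_Hm:
  "length fs = m \<Longrightarrow> set fs \<subseteq> pt_ideal P \<Longrightarrow> prod_list fs \<in> ideal_gen (Hm P m)"
proof (induction fs arbitrary: m)
  case Nil
  then show ?case by (intro ideal_gen_base) (auto simp: Hm_def)
next
  case (Cons f fs)
  then obtain k where k: "m = Suc k" "length fs = k" by auto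
  have "f * prod_list fs \<in> ideal_gen (Hm P (Suc k))"
  proof (rule mult_gen_closed[of f "genP P" _ "Hm P k"])
    show "f \<in> ideal_gen (genP P)" using Cons.prems by (simp add: pt_ideal_genP)
    show "prod_list fs \<in> ideal_gen (Hm P k)" using Cons k by auto
    show "isideal (ideal_gen (Hm P (Suc k)))" by (rule ideal_gen_isideal)
    fix g h assume "g \<in> genP P" "h \<in> Hm P k"
    then obtain hs where "h = prod_list hs" "length hs = k" "set hs \<subseteq> genP P" by (auto simp: Hm_def)
    then have "g * h \<in> Hm P (Suc k)" unfolding Hm_def using \<open>g \<in> genP P\<close>
      by (intro CollectI exI[of _ "g # hs"]) auto
    then show "g * h \<in> ideal_gen (Hm P (Suc k))" by (rule ideal_gen_base)
  qed
  then show ?case using k by simp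
qed

lemma ideal_pow_Hm: "ideal_pow (pt_ideal P) m = ideal_gen (Hm P m)"
proof
  show "ideal_pow (pt_ideal P) m \<subseteq> ideal_gen (Hm P m)"
    unfolding ideal_pow_def by (rule ideal_gen_least) (auto intro: prod_in_Hm ideal_gen_isideal)
  have "Hm P m \<subseteq> {prod_list fs |fs. length fs = m \<and> set fs \<subseteq> pt_ideal P}"
    using ideal_gen_base[of _ "genP P"] by (auto simp: Hm_def pt_ideal_genP)
  then show "ideal_gen (Hm P m) \<subseteq> ideal_pow (pt_ideal P) m"
    unfolding ideal_pow_def by (intro ideal_gen_least ideal_gen_isideal) (auto intro: ideal_gen_base)
qed

lemma comp_ideal_pow: "F \<in> ideal_pow (pt_ideal P) m \<Longrightarrow> comp i j F \<in> ideal_pow (pt_ideal P) m"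
  unfolding ideal_pow_Hm by (rule comp_ideal_gen[OF Hm_bihom])

lemma comp_fat_ideal: "F \<in> fat_ideal X m \<Longrightarrow> comp i j F \<in> fat_ideal X m"
  unfolding fat_ideal_def by (auto intro: comp_ideal_pow)


lemma Dm_isideal: "isideal (Dm P m)"
  by (rule isidealI) (auto intro: Dm_add Dm_mult_left)

lemma genP_Dm1: "genP P \<subseteq> Dm P 1"
  by (auto simp: genP_def Dm_Suc[of _ P 0, simplified])

lemma pt_Dm1: "pt_ideal P \<subseteq> Dm P 1"
  unfolding pt_ideal_genP by (rule ideal_gen_least[OF genP_Dm1 Dm_isideal])

lemma prod_Dm: "set fs \<subseteq> pt_ideal P \<Longrightarrow> prod_list fs \<in> Dm P (length fs)"
proof (induction fs)
  case (Cons f fs)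
  then have "f \<in> Dm P 1" using pt_Dm1[of P] by auto
  then show ?case using Dm_mult[OF _ Cons.IH] Cons.prems by fastforce
qed simp

lemma pow_Dm: "ideal_pow (pt_ideal P) m \<subseteq> Dm P m"
  unfolding ideal_pow_def by (rule ideal_gen_least[OF _ Dm_isideal]) (auto dest: prod_Dm)

lemma pt_mult_pow:
  assumes "x \<in> pt_ideal P" "y \<in> ideal_pow (pt_ideal P) k"
  shows "x * y \<in> ideal_pow (pt_ideal P) (Suc k)"
proof -
  have "ideal_pow (pt_ideal P) k \<subseteq> {y. x * y \<in> ideal_pow (pt_ideal P) (Suc k)}"
    unfolding ideal_pow_def[of _ k]
  proof (rule ideal_gen_least)
    show "{prod_list fs |fs. length fs = k \<and> set fs \<subseteq> pt_ideal P} \<subseteq> {y. x * y \<in> ideal_pow (pt_ideal P) (Suc k)}"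
    proof
      fix y assume "y \<in> {prod_list fs |fs. length fs = k \<and> set fs \<subseteq> pt_ideal P}"
      then obtain fs where fs: "y = prod_list fs" "length fs = k" "set fs \<subseteq> pt_ideal P" by auto
      have "x * y = prod_list (x # fs)" using fs by simp
      also have "\<dots> \<in> ideal_pow (pt_ideal P) (Suc k)" unfolding ideal_pow_def
        by (rule ideal_gen_base, rule CollectI, rule exI[of _ "x # fs"]) (use fs assms(1) in auto)
      finally show "y \<in> {y. x * y \<in> ideal_pow (pt_ideal P) (Suc k)}" by simp
    qed
    show "isideal {y. x * y \<in> ideal_pow (pt_ideal P) (Suc k)}"
      by (rule isidealI) (auto simp: distrib_left mult.left_commute intro: isideal_0 isideal_add isideal_mult ideal_pow_isideal)
  qed
  then show ?thesis using assms(2) by auto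
qed

lemma psmult_psmult: "psmult c (psmult d F) = psmult (c * d) F"
  by (rule poly_mapping_eqI) (simp add: mult.assoc)

lemma psmult_one: "psmult 1 F = F"
  by (rule poly_mapping_eqI) simp

lemma pderiv_psmult: "pderiv_var v (psmult c F) = psmult c (pderiv_var v (F :: 'k::field bipoly))"
  by (simp add: psmult_conv pderiv_var_mult pderiv_var_single)

lemma derivs_psmult: "derivs vs (psmult c F) = psmult c (derivs vs (F :: 'k::field bipoly))"
  by (induction vs arbitrary: F) (simp_all add: pderiv_psmult)

definition lX :: "'k::field pt \<Rightarrow> 'k bipoly" where
  "lX P = psmult (snd (fst P)) (Xv X0) - psmult (fst (fst P)) (Xv X1)"
definition lY :: "'k::field pt \<Rightarrow> 'k bipoly" where
  "lY P = psmult (snd (snd P)) (Xv Y0) - psmult (fst (snd P)) (Xv Y1)"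
definition DPX :: "'k::field pt \<Rightarrow> 'k bipoly \<Rightarrow> 'k bipoly" where
  "DPX P F = psmult (fst (fst P)) (pderiv_var X0 F) + psmult (snd (fst P)) (pderiv_var X1 F)"
definition DPY :: "'k::field pt \<Rightarrow> 'k bipoly \<Rightarrow> 'k bipoly" where
  "DPY P F = psmult (fst (snd P)) (pderiv_var Y0 F) + psmult (snd (snd P)) (pderiv_var Y1 F)"

lemma lX_pt: "lX P \<in> pt_ideal P"
proof -
  have "lX P \<in> bihom_part 1 0"
    unfolding lX_def using Xv_bihom[of X0] Xv_bihom[of X1]
    by (intro bihom_diff bihom_psmult) (simp_all add: vdeg_def)
  moreover have "peval (lX P) P = 0"
    by (simp add: lX_def peval_diff peval_psmult peval_Xv mult.commute)
  ultimately show ?thesis unfolding pt_ideal_genP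
    by (intro ideal_gen_base) (auto simp: genP_def bihomogeneous_def)
qed

lemma lY_pt: "lY P \<in> pt_ideal P"
proof -
  have "lY P \<in> bihom_part 0 1"
    unfolding lY_def using Xv_bihom[of Y0] Xv_bihom[of Y1]
    by (intro bihom_diff bihom_psmult) (simp_all add: vdeg_def)
  moreover have "peval (lY P) P = 0"
    by (simp add: lY_def peval_diff peval_psmult peval_Xv mult.commute)
  ultimately show ?thesis unfolding pt_ideal_genP
    by (intro ideal_gen_base) (auto simp: genP_def bihomogeneous_def)
qed

lemma DPX_bihom: "F \<in> bihom_part i j \<Longrightarrow> DPX P F \<in> bihom_part (i - 1) j"
  unfolding DPX_def using bihom_pderiv[of F i j X0] bihom_pderiv[of F i j X1]
  by (intro bihom_add bihom_psmult) (simp_all add: vdeg_def)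

lemma DPY_bihom: "F \<in> bihom_part i j \<Longrightarrow> DPY P F \<in> bihom_part i (j - 1)"
  unfolding DPY_def using bihom_pderiv[of F i j Y0] bihom_pderiv[of F i j Y1]
  by (intro bihom_add bihom_psmult) (simp_all add: vdeg_def)

lemma DPX_Dm:
  assumes "F \<in> bihom_part i j" "F \<in> Dm P m"
  shows "DPX P F \<in> Dm P m"
  unfolding Dm_def
proof (intro CollectI allI impI)
  fix vs :: "var list" assume l: "length vs < m"
  obtain i' j' where G: "derivs vs F \<in> bihom_part i' j'" using derivs_bihom[OF assms(1)] by blast
  have "derivs vs (DPX P F) = DPX P (derivs vs F)"
    by (simp add: DPX_def derivs_add derivs_psmult derivs_pderiv)
  moreover have "peval (derivs vs F) P = 0" using assms(2) l by (simp add: Dm_def)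
  ultimately show "peval (derivs vs (DPX P F)) P = 0"
    using euler_X_eval[OF G, of P] by (simp add: DPX_def peval_add peval_psmult)
qed

lemma DPY_Dm:
  assumes "F \<in> bihom_part i j" "F \<in> Dm P m"
  shows "DPY P F \<in> Dm P m"
  unfolding Dm_def
proof (intro CollectI allI impI)
  fix vs :: "var list" assume l: "length vs < m"
  obtain i' j' where G: "derivs vs F \<in> bihom_part i' j'" using derivs_bihom[OF assms(1)] by blast
  have "derivs vs (DPY P F) = DPY P (derivs vs F)"
    by (simp add: DPY_def derivs_add derivs_psmult derivs_pderiv)
  moreover have "peval (derivs vs F) P = 0" using assms(2) l by (simp add: Dm_def)
  ultimately show "peval (derivs vs (DPY P F)) P = 0"
    using euler_Y_eval[OF G, of P] by (simp add: DPY_def peval_add peval_psmult)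
qed

lemma ring_id1: "(x0::'a::comm_ring_1) * (a0 * d0 + a1 * d1) - (a1 * x0 - a0 * x1) * d1 = a0 * (x0 * d0 + x1 * d1)"
  by (simp add: algebra_simps)
lemma ring_id2: "(x1::'a::comm_ring_1) * (a0 * d0 + a1 * d1) + (a1 * x0 - a0 * x1) * d0 = a1 * (x0 * d0 + x1 * d1)"
  by (simp add: algebra_simps)

lemma idX0:
  assumes "F \<in> bihom_part i j"
  shows "psmult (fst (fst P) * of_int i) F = Xv X0 * DPX P F - lX P * pderiv_var X1 F"
proof -
  have "Xv X0 * DPX P F - lX P * pderiv_var X1 F = sg 0 (fst (fst P)) * (Xv X0 * pderiv_var X0 F + Xv X1 * pderiv_var X1 F)"
    unfolding DPX_def lX_def psmult_conv by (rule ring_id1)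
  also have "\<dots> = psmult (fst (fst P) * of_int i) F"
    unfolding euler_X[OF assms] psmult_conv by (simp add: mult_single mult.assoc[symmetric] del: single_of_int)
  finally show ?thesis by simp
qed

lemma idX1:
  assumes "F \<in> bihom_part i j"
  shows "psmult (snd (fst P) * of_int i) F = Xv X1 * DPX P F + lX P * pderiv_var X0 F"
proof -
  have "Xv X1 * DPX P F + lX P * pderiv_var X0 F = sg 0 (snd (fst P)) * (Xv X0 * pderiv_var X0 F + Xv X1 * pderiv_var X1 F)"
    unfolding DPX_def lX_def psmult_conv by (rule ring_id2)
  also have "\<dots> = psmult (snd (fst P) * of_int i) F"
    unfolding euler_X[OF assms] psmult_conv by (simp add: mult_single mult.assoc[symmetric] del: single_of_int)
  finally show ?thesis by simp
qed

lemma idY0: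
  assumes "F \<in> bihom_part i j"
  shows "psmult (fst (snd P) * of_int j) F = Xv Y0 * DPY P F - lY P * pderiv_var Y1 F"
proof -
  have "Xv Y0 * DPY P F - lY P * pderiv_var Y1 F = sg 0 (fst (snd P)) * (Xv Y0 * pderiv_var Y0 F + Xv Y1 * pderiv_var Y1 F)"
    unfolding DPY_def lY_def psmult_conv by (rule ring_id1)
  also have "\<dots> = psmult (fst (snd P) * of_int j) F"
    unfolding euler_Y[OF assms] psmult_conv by (simp add: mult_single mult.assoc[symmetric] del: single_of_int)
  finally show ?thesis by simp
qed

lemma idY1:
  assumes "F \<in> bihom_part i j"
  shows "psmult (snd (snd P) * of_int j) F = Xv Y1 * DPY P F + lY P * pderiv_var Y0 F"
proof -
  have "Xv Y1 * DPY P F + lY P * pderiv_var Y0 F = sg 0 (snd (snd P)) * (Xv Y0 * pderiv_var Y0 F + Xv Y1 * pderiv_var Y1 F)"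
    unfolding DPY_def lY_def psmult_conv by (rule ring_id2)
  also have "\<dots> = psmult (snd (snd P) * of_int j) F"
    unfolding euler_Y[OF assms] psmult_conv by (simp add: mult_single mult.assoc[symmetric] del: single_of_int)
  finally show ?thesis by simp
qed

lemma pow_psmult_cancel:
  assumes "psmult c F \<in> ideal_pow I m" "c \<noteq> (0::'k::field)"
  shows "F \<in> ideal_pow I m"
proof -
  have "psmult (inverse c) (psmult c F) \<in> ideal_pow I m"
    by (rule isideal_psmult[OF ideal_pow_isideal assms(1)])
  then show ?thesis using assms(2) by (simp add: psmult_psmult psmult_one)
qed

lemma pow_zero_ideal: "ideal_pow (I :: 'k::comm_ring_1 bipoly set) 0 = UNIV"
proof -
  have "(1 :: 'k::comm_ring_1 bipoly) \<in> ideal_pow I 0"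
    unfolding ideal_pow_def by (rule ideal_gen_base) auto
  then have "F * 1 \<in> ideal_pow I 0" for F by (rule isideal_mult[OF ideal_pow_isideal])
  then show ?thesis by auto
qed

lemma Dm_imp_pow_nat:
  fixes P :: "'k::field_char_0 pt"
  assumes vP: "valid_pt P"
  shows "F \<in> bihom_part (int i) (int j) \<Longrightarrow> F \<in> Dm P m \<Longrightarrow> F \<in> ideal_pow (pt_ideal P) m"
proof (induction m arbitrary: i j F)
  case 0 then show ?case by (simp add: pow_zero_ideal)
next
  case (Suc k)
  note outerIH = Suc.IH
  have main: "\<forall>i j F. i + j = n \<longrightarrow> F \<in> bihom_part (int i) (int j) \<longrightarrow> F \<in> Dm P (Suc k) \<longrightarrow> F \<in> ideal_pow (pt_ideal P) (Suc k)" for n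
  proof (induction n)
    case 0
    show ?case
    proof (intro allI impI)
      fix i j and F :: "'k bipoly"
      assume a: "i + j = 0" "F \<in> bihom_part (int i) (int j)" "F \<in> Dm P (Suc k)"
      then have "F = sg 0 (lk F 0)" using bihom_00[of F] by simp
      moreover have "peval F P = 0" using a(3) by (simp add: Dm_Suc)
      moreover have "peval (sg 0 (lk F 0)) P = lk F 0" by (simp add: peval_single mon_def)
      ultimately have "F = 0" by (metis single_zero)
      then show "F \<in> ideal_pow (pt_ideal P) (Suc k)" by (simp add: isideal_0[OF ideal_pow_isideal])
    qed
  next
    case (Suc n)
    show ?case
    proof (intro allI impI)
      fix i j and F :: "'k bipoly"
      assume a: "i + j = Suc n" "F \<in> bihom_part (int i) (int j)" "F \<in> Dm P (Suc k)"
      show "F \<in> ideal_pow (pt_ideal P) (Suc k)"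
      proof (cases i)
        case (Suc i')
        have d0: "pderiv_var X0 F \<in> bihom_part (int i') (int j)" "pderiv_var X1 F \<in> bihom_part (int i') (int j)"
          using bihom_pderiv[OF a(2), of X0] bihom_pderiv[OF a(2), of X1] Suc by (simp_all add: vdeg_def)
        have "pderiv_var X0 F \<in> Dm P k" "pderiv_var X1 F \<in> Dm P k" using a(3) by (simp_all add: Dm_Suc)
        then have p0: "pderiv_var X0 F \<in> ideal_pow (pt_ideal P) k" and p1: "pderiv_var X1 F \<in> ideal_pow (pt_ideal P) k"
          using outerIH[OF d0(1)] outerIH[OF d0(2)] by blast+
        have "DPX P F \<in> bihom_part (int i') (int j)" using DPX_bihom[OF a(2)] Suc by simp
        moreover have "DPX P F \<in> Dm P (Suc k)" by (rule DPX_Dm[OF a(2,3)])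
        ultimately have dp: "DPX P F \<in> ideal_pow (pt_ideal P) (Suc k)"
          using Suc.IH[rule_format, of i' j] \<open>i = Suc i'\<close> a(1) by simp
        have i0: "(of_int (int i) :: 'k) \<noteq> 0" using Suc by (simp only: of_int_of_nat_eq of_nat_eq_0_iff; simp)
        show ?thesis
        proof (cases "fst (fst P) = 0")
          case False
          have "psmult (fst (fst P) * of_int (int i)) F \<in> ideal_pow (pt_ideal P) (Suc k)"
            unfolding idX0[OF a(2)]
            by (intro isideal_diff[OF ideal_pow_isideal] isideal_mult[OF ideal_pow_isideal] dp pt_mult_pow lX_pt p1)
          then show ?thesis using False i0 by (elim pow_psmult_cancel) simp
        next
          case True
          then have nz: "snd (fst P) \<noteq> 0" using vP by (cases P) (auto simp: valid_pt_def)
          have "psmult (snd (fst P) * of_int (int i)) F \<in> ideal_pow (pt_ideal P) (Suc k)"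
            unfolding idX1[OF a(2)]
            by (intro isideal_add[OF ideal_pow_isideal] isideal_mult[OF ideal_pow_isideal] dp pt_mult_pow lX_pt p0)
          then show ?thesis using nz i0 by (elim pow_psmult_cancel) simp
        qed
      next
        case 0
        then obtain j' where j: "j = Suc j'" "j' = n" using a(1) by auto
        have d0: "pderiv_var Y0 F \<in> bihom_part (int i) (int j')" "pderiv_var Y1 F \<in> bihom_part (int i) (int j')"
          using bihom_pderiv[OF a(2), of Y0] bihom_pderiv[OF a(2), of Y1] j by (simp_all add: vdeg_def)
        have "pderiv_var Y0 F \<in> Dm P k" "pderiv_var Y1 F \<in> Dm P k" using a(3) by (simp_all add: Dm_Suc)
        then have p0: "pderiv_var Y0 F \<in> ideal_pow (pt_ideal P) k" and p1: "pderiv_var Y1 F \<in> ideal_pow (pt_ideal P) k"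
          using outerIH[OF d0(1)] outerIH[OF d0(2)] by blast+
        have "DPY P F \<in> bihom_part (int i) (int j')" using DPY_bihom[OF a(2)] j by simp
        moreover have "DPY P F \<in> Dm P (Suc k)" by (rule DPY_Dm[OF a(2,3)])
        ultimately have dp: "DPY P F \<in> ideal_pow (pt_ideal P) (Suc k)"
          using Suc.IH[rule_format, of i j'] 0 j by simp
        have j0: "(of_int (int j) :: 'k) \<noteq> 0" using j by (simp only: of_int_of_nat_eq of_nat_eq_0_iff; simp)
        show ?thesis
        proof (cases "fst (snd P) = 0")
          case False
          have "psmult (fst (snd P) * of_int (int j)) F \<in> ideal_pow (pt_ideal P) (Suc k)"
            unfolding idY0[OF a(2)]
            by (intro isideal_diff[OF ideal_pow_isideal] isideal_mult[OF ideal_pow_isideal] dp pt_mult_pow lY_pt p1)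
          then show ?thesis using False j0 by (elim pow_psmult_cancel) simp
        next
          case True
          then have nz: "snd (snd P) \<noteq> 0" using vP by (cases P) (auto simp: valid_pt_def)
          have "psmult (snd (snd P) * of_int (int j)) F \<in> ideal_pow (pt_ideal P) (Suc k)"
            unfolding idY1[OF a(2)]
            by (intro isideal_add[OF ideal_pow_isideal] isideal_mult[OF ideal_pow_isideal] dp pt_mult_pow lY_pt p0)
          then show ?thesis using nz j0 by (elim pow_psmult_cancel) simp
        qed
      qed
    qed
  qed
  then show ?case using Suc.prems by blast
qed

lemma Dm_imp_pow:
  fixes P :: "'k::field_char_0 pt"
  assumes "valid_pt P" "F \<in> bihom_part i j" "F \<in> Dm P m"
  shows "F \<in> ideal_pow (pt_ideal P) m"
proof (cases "0 \<le> i \<and> 0 \<le> j")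
  case True
  then obtain i' j' where "i = int i'" "j = int j'" by (metis nonneg_int_cases)
  then show ?thesis using Dm_imp_pow_nat assms by blast
next
  case False
  then have "F = 0" using assms(2) bihom_neg[of i j] by auto
  then show ?thesis by (simp add: isideal_0[OF ideal_pow_isideal])
qed

lemma pow_iff_Dm:
  fixes P :: "'k::field_char_0 pt"
  assumes "valid_pt P" "F \<in> bihom_part i j"
  shows "F \<in> ideal_pow (pt_ideal P) m \<longleftrightarrow> F \<in> Dm P m"
  using Dm_imp_pow[OF assms] pow_Dm by blast

lemma Dm_nzd:
  fixes L :: "'k::field bipoly"
  assumes "peval L P \<noteq> 0"
  shows "L * F \<in> Dm P m \<Longrightarrow> F \<in> Dm P m"
proof (induction m arbitrary: F)
  case (Suc k)
  have Fk: "F \<in> Dm P k" using Suc.IH Suc.prems Dm_mono[of k "Suc k" P] by auto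
  have "peval L P * peval F P = 0" using Suc.prems by (simp add: Dm_Suc peval_mult)
  then have "peval F P = 0" using assms by simp
  moreover have "pderiv_var v F \<in> Dm P k" for v
  proof -
    have "pderiv_var v (L * F) \<in> Dm P k" using Suc.prems by (simp add: Dm_Suc)
    moreover have "pderiv_var v L * F \<in> Dm P k" using Fk by (rule Dm_mult_left)
    ultimately have "pderiv_var v (L * F) - pderiv_var v L * F \<in> Dm P k" by (rule Dm_diff)
    then have "L * pderiv_var v F \<in> Dm P k" by (simp add: pderiv_var_mult)
    then show ?thesis by (rule Suc.IH)
  qed
  ultimately show ?case by (simp add: Dm_Suc)
qed simp

lemma pow_nzd:
  fixes P :: "'k::field_char_0 pt"
  assumes "valid_pt P" "peval L P \<noteq> 0" "F \<in> bihom_part i j" "L * F \<in> ideal_pow (pt_ideal P) m"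
  shows "F \<in> ideal_pow (pt_ideal P) m"
  using Dm_nzd[OF assms(2)] pow_Dm assms Dm_imp_pow by blast

lemma pow_Suc_iff:
  fixes P :: "'k::field_char_0 pt"
  assumes "valid_pt P" "F \<in> bihom_part i j" "1 \<le> m"
  shows "F \<in> ideal_pow (pt_ideal P) (Suc m) \<longleftrightarrow> F \<in> ideal_pow (pt_ideal P) m \<and> (\<forall>v. pderiv_var v F \<in> ideal_pow (pt_ideal P) m)"
proof -
  have dv: "pderiv_var v F \<in> ideal_pow (pt_ideal P) m \<longleftrightarrow> pderiv_var v F \<in> Dm P m" for v
    by (rule pow_iff_Dm[OF assms(1) bihom_pderiv[OF assms(2)]])
  have "F \<in> Dm P (Suc m) \<longleftrightarrow> F \<in> Dm P m \<and> (\<forall>v. pderiv_var v F \<in> Dm P m)"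
  proof
    assume "F \<in> Dm P (Suc m)"
    then show "F \<in> Dm P m \<and> (\<forall>v. pderiv_var v F \<in> Dm P m)" using Dm_mono[of m "Suc m" P] by (auto simp: Dm_Suc)
  next
    assume b: "F \<in> Dm P m \<and> (\<forall>v. pderiv_var v F \<in> Dm P m)"
    obtain m' where "m = Suc m'" using assms(3) by (cases m) auto
    then have "peval F P = 0" using b by (simp add: Dm_Suc)
    then show "F \<in> Dm P (Suc m)" using b by (simp add: Dm_Suc)
  qed
  then show ?thesis using pow_iff_Dm[OF assms(1,2)] dv by simp
qed


context vector_space begin

definition fds :: "'b set \<Rightarrow> bool" where
  "fds V \<longleftrightarrow> local.subspace V \<and> (\<exists>B. finite B \<and> V \<subseteq> local.span B)"

lemma fds_basis:
  assumes "local.fds V"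
  obtains B where "B \<subseteq> V" "local.independent B" "V \<subseteq> local.span B" "finite B" "card B = local.dim V"
proof -
  obtain B where B: "B \<subseteq> V" "local.independent B" "V \<subseteq> local.span B" "card B = local.dim V" by (rule basis_exists)
  obtain T where T: "finite T" "V \<subseteq> local.span T" using assms by (auto simp: fds_def)
  have "finite B" using independent_span_bound[OF T(1) B(2)] B(1) T(2) by auto
  then show ?thesis using B that by blast
qed

lemma fds_indep_card:
  assumes "local.fds V" "local.independent B" "B \<subseteq> V"
  shows "finite B \<and> card B \<le> local.dim V"
proof -
  obtain C where C: "C \<subseteq> V" "local.independent C" "V \<subseteq> local.span C" "finite C" "card C = local.dim V"
    using assms(1) by (rule fds_basis)
  show ?thesis using independent_span_bound[OF C(4) assms(2)] assms(3) C by auto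
qed

lemma fds_subset: "local.fds V \<Longrightarrow> local.subspace W \<Longrightarrow> W \<subseteq> V \<Longrightarrow> local.fds W"
  by (auto simp: fds_def)

lemma fds_dim_mono: "local.fds V \<Longrightarrow> W \<subseteq> V \<Longrightarrow> local.dim W \<le> local.dim V"
proof -
  assume a: "local.fds V" "W \<subseteq> V"
  obtain C where C: "C \<subseteq> V" "local.independent C" "V \<subseteq> local.span C" "finite C" "card C = local.dim V"
    using a(1) by (rule fds_basis)
  show ?thesis using dim_le_card[of W C] a C by auto
qed

lemma fds_dim_eq:
  assumes "local.fds V" "local.subspace W" "W \<subseteq> V" "local.dim W = local.dim V"
  shows "W = V"
proof -
  have fW: "local.fds W" using fds_subset assms by blast
  obtain B where B: "B \<subseteq> W" "local.independent B" "W \<subseteq> local.span B" "finite B" "card B = local.dim W"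
    using fW by (rule fds_basis)
  have "V \<subseteq> local.span B"
  proof
    fix x assume x: "x \<in> V"
    show "x \<in> local.span B"
    proof (rule ccontr)
      assume nx: "x \<notin> local.span B"
      then have "local.independent (insert x B)" using B(2) by (rule independent_insertI)
      moreover have "insert x B \<subseteq> V" using x B(1) assms(3) by auto
      ultimately have "card (insert x B) \<le> local.dim V" using fds_indep_card[OF assms(1)] by blast
      moreover have "x \<notin> B" using nx span_base by blast
      ultimately show False using B(4,5) assms(4) by simp
    qed
  qed
  then have "V \<subseteq> W" using span_minimal[OF B(1) assms(2)] by blast
  then show ?thesis using assms(3) by blast
qed

lemma dim_zero_space: "local.dim {0} = 0"
  using dim_eq_card[of "{}" "{0}"] independent_empty span_insert_0[of "{}"] by simp

lemma fds_dim0: "local.fds V \<Longrightarrow> local.dim V = 0 \<Longrightarrow> V = {0}"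
proof -
  assume a: "local.fds V" "local.dim V = 0"
  obtain B where B: "B \<subseteq> V" "local.independent B" "V \<subseteq> local.span B" "finite B" "card B = local.dim V"
    using a(1) by (rule fds_basis)
  then have "B = {}" using a(2) by simp
  then show ?thesis using B(3) a(1) by (auto simp: fds_def subspace_0)
qed

lemma fds_zero: "local.fds {0}"
  by (auto simp: fds_def intro!: exI[of _ "{}"])

lemma indep_disjoint_span:
  assumes "local.independent (A \<union> C)" "A \<inter> C = {}" "finite A" "finite C" "x \<in> local.span A" "x \<in> local.span C"
  shows "x = 0"
proof -
  obtain u where u: "x = (\<Sum>v\<in>A. u v *s v)" using assms(5) span_finite[OF assms(3)] by auto
  obtain w where w: "x = (\<Sum>v\<in>C. w v *s v)" using assms(6) span_finite[OF assms(4)] by auto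
  let ?c = "\<lambda>v. if v \<in> A then u v else - w v"
  have "(\<Sum>v\<in>A \<union> C. ?c v *s v) = (\<Sum>v\<in>A. ?c v *s v) + (\<Sum>v\<in>C. ?c v *s v)"
    using assms(3,4,2) by (rule sum.union_disjoint)
  also have "(\<Sum>v\<in>A. ?c v *s v) = x" unfolding u by (rule sum.cong) auto
  also have "(\<Sum>v\<in>C. ?c v *s v) = (\<Sum>v\<in>C. - (w v *s v))" using assms(2) by (intro sum.cong) auto
  also have "\<dots> = - x" unfolding w by (simp add: sum_negf)
  finally have z: "(\<Sum>v\<in>A \<union> C. ?c v *s v) = 0" by simp
  have "u v = 0" if "v \<in> A" for v
    using independentD[OF assms(1) _ subset_refl z, of v] assms(3,4) that by simp
  then show ?thesis unfolding u by simp
qed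

end

context vector_space_pair begin

lemma fds_image:
  assumes "Vector_Spaces.linear s1 s2 f" "vs1.fds V"
  shows "vs2.fds (f ` V)"
proof -
  obtain B where B: "finite B" "V \<subseteq> vs1.span B" "vs1.subspace V" using assms(2) by (auto simp: vs1.fds_def)
  have 1: "f ` V \<subseteq> vs2.span (f ` B)" by (rule linear_spans_image[OF assms(1) B(2)])
  have 2: "vs2.subspace (f ` V)" by (rule linear_subspace_image[OF assms(1) B(3)])
  have 3: "finite (f ` B)" using B(1) by simp
  show ?thesis unfolding vs2.fds_def using 1 2 3 by blast
qed

lemma rank_nullity:
  assumes lf: "Vector_Spaces.linear s1 s2 f" and V: "vs1.fds V"
  shows "vs1.dim V = vs1.dim (V \<inter> {x. f x = 0}) + vs2.dim (f ` V)"
proof -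
  let ?K = "V \<inter> {x. f x = 0}"
  have sK: "vs1.subspace ?K"
    using V linear_subspace_kernel[OF lf] by (intro vs1.subspace_inter) (auto simp: vs1.fds_def)
  have fK: "vs1.fds ?K" using vs1.fds_subset[OF V sK] by blast
  obtain BK where BK: "BK \<subseteq> ?K" "vs1.independent BK" "?K \<subseteq> vs1.span BK" "finite BK" "card BK = vs1.dim ?K"
    using fK by (rule vs1.fds_basis)
  obtain B where B: "BK \<subseteq> B" "B \<subseteq> V" "vs1.independent B" "V \<subseteq> vs1.span B"
    using vs1.maximal_independent_subset_extend[of BK V] BK(1,2) by blast
  have fB: "finite B" using vs1.fds_indep_card[OF V B(3,2)] by blast
  have cB: "card B = vs1.dim V" using vs1.basis_card_eq_dim[OF B(2,4,3)] .
  let ?B1 = "B - BK"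
  have sV: "vs1.subspace V" using V by (simp add: vs1.fds_def)
  have inj: "inj_on f (vs1.span ?B1)"
    unfolding linear_inj_on_iff_eq_0[OF lf vs1.subspace_span]
  proof (intro ballI impI)
    fix x assume x: "x \<in> vs1.span ?B1" "f x = 0"
    have "vs1.span ?B1 \<subseteq> V" using B(2) sV by (intro vs1.span_minimal) auto
    then have "x \<in> ?K" using x by auto
    then have "x \<in> vs1.span BK" using BK(3) by auto
    moreover have "vs1.independent (?B1 \<union> BK)" using B(1,3) by (simp add: Un_absorb2)
    ultimately show "x = 0" using vs1.indep_disjoint_span[of ?B1 BK x] fB BK(4) x(1) by auto
  qed
  have ind: "vs2.independent (f ` ?B1)" by (rule linear_independent_injective_image[OF lf _ inj]) (use B(3) vs1.independent_mono in blast)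
  have injB1: "inj_on f ?B1" using inj vs1.span_superset inj_on_subset by blast
  have sub: "f ` ?B1 \<subseteq> f ` V" using B(2) by auto
  have span: "f ` V \<subseteq> vs2.span (f ` ?B1)"
  proof -
    have "f ` B \<subseteq> vs2.span (f ` ?B1)"
    proof
      fix y assume "y \<in> f ` B"
      then obtain b where b: "b \<in> B" "y = f b" by auto
      show "y \<in> vs2.span (f ` ?B1)"
      proof (cases "b \<in> BK")
        case True
        then have "y = 0" using BK(1) b by auto
        then show ?thesis by (simp add: vs2.span_zero)
      next
        case False
        then show ?thesis using b by (auto intro: vs2.span_base)
      qed
    qed
    then have "vs2.span (f ` B) \<subseteq> vs2.span (f ` ?B1)" by (rule vs2.span_minimal) simp
    moreover have "f ` V \<subseteq> vs2.span (f ` B)" using linear_spans_image[OF lf B(4)] .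
    ultimately show ?thesis by blast
  qed
  have "card (f ` ?B1) = vs2.dim (f ` V)" by (rule vs2.basis_card_eq_dim[OF sub span ind])
  moreover have "card (f ` ?B1) = card ?B1" using injB1 by (rule card_image)
  moreover have "card ?B1 = card B - card BK" using B(1) fB by (simp add: card_Diff_subset finite_subset)
  moreover have "card BK \<le> card B" using B(1) fB by (rule card_mono[rotated])
  ultimately show ?thesis using cB BK(5) by linarith
qed

lemma dim_inj_image:
  assumes lf: "Vector_Spaces.linear s1 s2 f" and V: "vs1.fds V" and inj: "\<And>x. x \<in> V \<Longrightarrow> f x = 0 \<Longrightarrow> x = 0"
  shows "vs2.dim (f ` V) = vs1.dim V"
proof -
  have "V \<inter> {x. f x = 0} = {0}" using inj V linear_0[OF lf] by (auto simp: vs1.fds_def vs1.subspace_0)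
  then show ?thesis using rank_nullity[OF lf V] vs1.dim_zero_space by simp
qed

end

definition pscale :: "('a \<Rightarrow> 'b \<Rightarrow> 'b) \<Rightarrow> 'a \<Rightarrow> 'b \<times> 'b \<Rightarrow> 'b \<times> 'b" where
  "pscale s c p = (s c (fst p), s c (snd p))"

context vector_space begin

lemma vs_pscale: "vector_space (pscale scale)"
proof (unfold_locales, goal_cases)
  case (1 a x y) show ?case by (simp add: pscale_def prod_eq_iff local.scale_right_distrib)
next
  case (2 a b x) show ?case by (simp add: pscale_def prod_eq_iff local.scale_left_distrib)
next
  case (3 a b x) show ?case by (simp add: pscale_def)
next
  case (4 x) show ?case by (simp add: pscale_def)
qed

lemma dim_sum_formula:
  assumes A: "local.fds A" and B: "local.fds B"
  shows "local.dim {x + y | x y. x \<in> A \<and> y \<in> B} + local.dim (A \<inter> B) = local.dim A + local.dim B"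
proof -
  interpret ps: vector_space "pscale scale" by (rule vs_pscale)
  interpret vp: vector_space_pair "pscale scale" scale ..
  interpret vp2: vector_space_pair scale "pscale scale" ..
  have sA: "local.subspace A" and sB: "local.subspace B" using A B by (auto simp: fds_def)
  have lin_sum: "Vector_Spaces.linear (pscale scale) scale (\<lambda>p. fst p + snd p)"
    unfolding Vector_Spaces.linear_iff by (auto simp: pscale_def scale_right_distrib vs_pscale vector_space_axioms)
  have lin_fst: "Vector_Spaces.linear (pscale scale) scale fst"
    unfolding Vector_Spaces.linear_iff by (auto simp: pscale_def vs_pscale vector_space_axioms)
  have lin_snd: "Vector_Spaces.linear (pscale scale) scale snd"
    unfolding Vector_Spaces.linear_iff by (auto simp: pscale_def vs_pscale vector_space_axioms)
  have lin_i1: "Vector_Spaces.linear scale (pscale scale) (\<lambda>x. (x, 0))"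
    unfolding Vector_Spaces.linear_iff by (auto simp: pscale_def vs_pscale vector_space_axioms)
  have lin_i2: "Vector_Spaces.linear scale (pscale scale) (\<lambda>x. (0, x))"
    unfolding Vector_Spaces.linear_iff by (auto simp: pscale_def vs_pscale vector_space_axioms)
  let ?V = "A \<times> B"
  have sV: "ps.subspace ?V"
    unfolding ps.subspace_def using sA sB by (auto simp: pscale_def zero_prod_def local.subspace_0 local.subspace_add local.subspace_scale)
  have fV: "ps.fds ?V"
  proof -
    have f1: "ps.fds ((\<lambda>x. (x, 0)) ` A)" by (rule vp2.fds_image[OF lin_i1 A])
    have f2: "ps.fds ((\<lambda>x. (0, x)) ` B)" by (rule vp2.fds_image[OF lin_i2 B])
    obtain T1 where T1: "finite T1" "(\<lambda>x. (x, 0)) ` A \<subseteq> ps.span T1" using f1 by (auto simp: ps.fds_def)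
    obtain T2 where T2: "finite T2" "(\<lambda>x. (0, x)) ` B \<subseteq> ps.span T2" using f2 by (auto simp: ps.fds_def)
    have "?V \<subseteq> ps.span (T1 \<union> T2)"
    proof
      fix p assume "p \<in> ?V"
      then obtain a b where p: "p = (a, 0) + (0, b)" "a \<in> A" "b \<in> B" by (cases p) auto
      have "(a, 0) \<in> ps.span (T1 \<union> T2)" using T1 p(2) ps.span_mono[of T1 "T1 \<union> T2"] by auto
      moreover have "(0, b) \<in> ps.span (T1 \<union> T2)" using T2 p(3) ps.span_mono[of T2 "T1 \<union> T2"] by auto
      ultimately show "p \<in> ps.span (T1 \<union> T2)" unfolding p(1) by (rule ps.span_add)
    qed
    then show ?thesis unfolding ps.fds_def using sV T1(1) T2(1) by blast
  qed
  have k1: "?V \<inter> {p. fst p = 0} = {0} \<times> B" using sA by (auto simp: subspace_0)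
  have i1: "fst ` ?V = A" using sB local.subspace_0[OF sB] by (auto simp: fst_image_times)
  have sVB: "ps.subspace ({0} \<times> B)"
    unfolding ps.subspace_def using sB by (auto simp: pscale_def zero_prod_def local.subspace_0 local.subspace_add local.subspace_scale)
  have fVB: "ps.fds ({0} \<times> B)" using ps.fds_subset[OF fV sVB] sA subspace_0 by blast
  have "snd ` ({0} \<times> B) = B" by (simp add: snd_image_times)
  then have dVB: "ps.dim ({0} \<times> B) = local.dim B"
    using vp.dim_inj_image[OF lin_snd fVB] by (auto simp: zero_prod_def)
  have dV: "ps.dim ?V = local.dim A + local.dim B"
    using vp.rank_nullity[OF lin_fst fV] k1 i1 dVB by simp
  let ?K = "?V \<inter> {p. fst p + snd p = 0}"
  have sK: "ps.subspace ?K" using sV vp.linear_subspace_kernel[OF lin_sum] by (intro ps.subspace_inter) auto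
  have fK: "ps.fds ?K" using ps.fds_subset[OF fV sK] by blast
  have "fst ` ?K = A \<inter> B"
  proof
    show "fst ` ?K \<subseteq> A \<inter> B"
    proof
      fix x assume "x \<in> fst ` ?K"
      then obtain y where "x \<in> A" "y \<in> B" "x + y = 0" by auto
      then have "x = - y" by (simp add: eq_neg_iff_add_eq_0)
      then show "x \<in> A \<inter> B" using \<open>x \<in> A\<close> \<open>y \<in> B\<close> sB subspace_neg by auto
    qed
    show "A \<inter> B \<subseteq> fst ` ?K"
    proof
      fix x assume "x \<in> A \<inter> B"
      then have "(x, - x) \<in> ?K" using sB subspace_neg by auto
      then show "x \<in> fst ` ?K" by (intro image_eqI[of _ _ "(x, - x)"]) auto
    qed
  qed
  moreover have "ps.dim ?K = local.dim (fst ` ?K)"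
    using vp.dim_inj_image[OF lin_fst fK] by (auto simp: zero_prod_def)
  ultimately have dK: "ps.dim ?K = local.dim (A \<inter> B)" by simp
  have "(\<lambda>p. fst p + snd p) ` ?V = {x + y | x y. x \<in> A \<and> y \<in> B}"
  proof
    show "(\<lambda>p. fst p + snd p) ` ?V \<subseteq> {x + y | x y. x \<in> A \<and> y \<in> B}"
    proof (rule image_subsetI)
      fix p assume p: "p \<in> ?V"
      show "fst p + snd p \<in> {x + y | x y. x \<in> A \<and> y \<in> B}"
        using p by (intro CollectI exI[of _ "fst p"] exI[of _ "snd p"]) (auto simp: mem_Times_iff)
    qed
    show "{x + y | x y. x \<in> A \<and> y \<in> B} \<subseteq> (\<lambda>p. fst p + snd p) ` ?V"
    proof
      fix z assume "z \<in> {x + y | x y. x \<in> A \<and> y \<in> B}"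
      then obtain x y where "z = x + y" "x \<in> A" "y \<in> B" by blast
      then show "z \<in> (\<lambda>p. fst p + snd p) ` ?V" by (intro image_eqI[of _ _ "(x, y)"]) auto
    qed
  qed
  then show ?thesis using vp.rank_nullity[OF lin_sum fV] dV dK by simp
qed

lemma fds_sum:
  assumes A: "local.fds A" and B: "local.fds B"
  shows "local.fds {x + y | x y. x \<in> A \<and> y \<in> B}"
proof -
  obtain T1 where T1: "finite T1" "A \<subseteq> local.span T1" using A by (auto simp: fds_def)
  obtain T2 where T2: "finite T2" "B \<subseteq> local.span T2" using B by (auto simp: fds_def)
  have "{x + y | x y. x \<in> A \<and> y \<in> B} \<subseteq> local.span (T1 \<union> T2)"
    using T1 T2 span_mono[of T1 "T1 \<union> T2"] span_mono[of T2 "T1 \<union> T2"] by (auto intro!: span_add)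
  moreover have "local.subspace {x + y | x y. x \<in> A \<and> y \<in> B}" using A B by (intro subspace_sums) (auto simp: fds_def)
  ultimately show ?thesis unfolding fds_def using T1 T2 by blast
qed

end


lemma vs_psmult: "vector_space (psmult :: 'k::field \<Rightarrow> 'k bipoly \<Rightarrow> 'k bipoly)"
  by unfold_locales (simp_all add: poly_mapping_eq_iff fun_eq_iff lookup_add distrib_left distrib_right mult.assoc)

lemma vs_osmult: "vector_space (osmult :: 'k::field \<Rightarrow> 'k omega \<Rightarrow> 'k omega)"
proof -
  interpret pv: vector_space "psmult :: 'k \<Rightarrow> 'k bipoly \<Rightarrow> 'k bipoly" by (rule vs_psmult)
  show ?thesis
    by unfold_locales (simp_all add: osmult_def fun_eq_iff pv.scale_right_distrib pv.scale_left_distrib)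
qed

interpretation pv: vector_space "psmult :: 'k::field \<Rightarrow> 'k bipoly \<Rightarrow> 'k bipoly" by (rule vs_psmult)
interpretation ov: vector_space "osmult :: 'k::field \<Rightarrow> 'k omega \<Rightarrow> 'k omega" by (rule vs_osmult)
interpretation pp: vector_space_pair "psmult :: 'k::field \<Rightarrow> 'k bipoly \<Rightarrow> 'k bipoly" "psmult :: 'k::field \<Rightarrow> 'k bipoly \<Rightarrow> 'k bipoly" ..
interpretation po: vector_space_pair "psmult :: 'k::field \<Rightarrow> 'k bipoly \<Rightarrow> 'k bipoly" "osmult :: 'k::field \<Rightarrow> 'k omega \<Rightarrow> 'k omega" ..

lemma pdim_eq: "pdim V = pv.dim V" by (simp add: pdim_def)
lemma odim_eq: "odim V = ov.dim V" by (simp add: odim_def)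

lemma sg_key_inj: "sg x (1::'k::zero_neq_one) = sg y 1 \<Longrightarrow> x = y"
  by (metis lookup_single_eq lookup_single_not_eq zero_neq_one)

lemma psmult_single1: "psmult c (sg m 1) = sg m (c::'k::field)"
  by (rule poly_mapping_eqI) (simp add: lookup_single when_def)

lemma bihom_subspace: "pv.subspace (bihom_part i j :: 'k::field bipoly set)"
  unfolding pv.subspace_def by (auto intro: bihom_add bihom_psmult)

lemma mono_eqI: "lk m X0 = lk m' X0 \<Longrightarrow> lk m X1 = lk m' X1 \<Longrightarrow> lk m Y0 = lk m' Y0 \<Longrightarrow> lk m Y1 = lk m' Y1 \<Longrightarrow> m = m'"
  by (rule poly_mapping_eqI) (case_tac k; simp)

lemma finite_mbasis: "finite {m :: var \<Rightarrow>\<^sub>0 nat. bideg m = (i, j)}"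
proof -
  let ?N = "nat i + nat j"
  let ?g = "\<lambda>m :: var \<Rightarrow>\<^sub>0 nat. (lk m X0, lk m X1, lk m Y0, lk m Y1)"
  have "inj_on ?g {m. bideg m = (i, j)}" by (rule inj_onI) (auto intro: mono_eqI)
  moreover have "?g ` {m. bideg m = (i, j)} \<subseteq> {..?N} \<times> {..?N} \<times> {..?N} \<times> {..?N}"
    by (auto simp: bideg_def)
  ultimately show ?thesis
    by (intro finite_imageD[of ?g]) (auto intro: finite_subset[of _ "{..?N} \<times> {..?N} \<times> {..?N} \<times> {..?N}"])
qed

definition mbasis :: "int \<Rightarrow> int \<Rightarrow> 'k::field bipoly set" where
  "mbasis i j = (\<lambda>m. sg m 1) ` {m. bideg m = (i, j)}"

lemma bihom_span_mbasis: "bihom_part i j \<subseteq> pv.span (mbasis i j :: 'k::field bipoly set)"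
proof
  fix F :: "'k bipoly" assume F: "F \<in> bihom_part i j"
  have "F = (\<Sum>m\<in>kz F. psmult (lk F m) (sg m 1))" by (simp add: psmult_single1 flip: poly_expand)
  also have "\<dots> \<in> pv.span (mbasis i j)"
    using F by (intro pv.span_sum pv.span_scale pv.span_base) (auto simp: mbasis_def bihom_part_def)
  finally show "F \<in> pv.span (mbasis i j)" .
qed

lemma bihom_fds: "pv.fds (bihom_part i j :: 'k::field bipoly set)"
  unfolding pv.fds_def
  by (intro conjI bihom_subspace exI[of _ "mbasis i j"]) (simp_all add: mbasis_def finite_mbasis bihom_span_mbasis[unfolded mbasis_def])

lemma mbasis_indep: "pv.independent (mbasis i j :: 'k::field bipoly set)"
  unfolding pv.independent_explicit_module
proof (intro allI impI)
  fix t u and v :: "'k bipoly"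
  assume a: "finite t" "t \<subseteq> mbasis i j" "(\<Sum>v\<in>t. psmult (u v) v) = 0" "v \<in> t"
  then obtain m where m: "v = sg m 1" by (auto simp: mbasis_def)
  have l: "lk v' m = (if v' = v then 1 else 0)" if vt: "v' \<in> t" for v'
  proof -
    obtain m' where "v' = sg m' 1" using vt a(2) by (auto simp: mbasis_def)
    then show ?thesis using m by (auto simp: lookup_single when_def dest: sg_key_inj)
  qed
  have "0 = lk (\<Sum>v\<in>t. psmult (u v) v) m" using a(3) by simp
  also have "\<dots> = (\<Sum>v'\<in>t. u v' * lk v' m)" by (simp add: lookup_sum)
  also have "\<dots> = (\<Sum>v'\<in>t. if v' = v then u v' else 0)" by (intro sum.cong) (auto simp: l)
  also have "\<dots> = u v" using a(1,4) by simp
  finally show "u v = 0" by simp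
qed

lemma card_mbasis_aux:
  assumes "0 \<le> i" "0 \<le> j"
  shows "card {m :: var \<Rightarrow>\<^sub>0 nat. bideg m = (i, j)} = (nat i + 1) * (nat j + 1)"
proof -
  let ?S = "{m :: var \<Rightarrow>\<^sub>0 nat. bideg m = (i, j)}"
  let ?h = "\<lambda>m :: var \<Rightarrow>\<^sub>0 nat. (lk m X0, lk m Y0)"
  let ?mk = "\<lambda>p q. sg X0 p + sg X1 (nat i - p) + sg Y0 q + sg Y1 (nat j - q) :: var \<Rightarrow>\<^sub>0 nat"
  have inj: "inj_on ?h ?S"
  proof (rule inj_onI)
    fix m m' assume "m \<in> ?S" "m' \<in> ?S" "?h m = ?h m'"
    then show "m = m'" by (intro mono_eqI) (auto simp: bideg_def)
  qed
  have "?h ` ?S = {..nat i} \<times> {..nat j}"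
  proof
    show "?h ` ?S \<subseteq> {..nat i} \<times> {..nat j}" by (auto simp: bideg_def)
    show "{..nat i} \<times> {..nat j} \<subseteq> ?h ` ?S"
    proof
      fix x assume "x \<in> {..nat i} \<times> {..nat j}"
      then obtain p q where pq: "x = (p, q)" "p \<le> nat i" "q \<le> nat j" by auto
      have "bideg (?mk p q) = (i, j)" using pq assms by (simp add: bideg_def lookup_add lookup_single)
      moreover have "?h (?mk p q) = x" using pq by (simp add: lookup_add lookup_single)
      ultimately show "x \<in> ?h ` ?S" by force
    qed
  qed
  then have "card (?h ` ?S) = (nat i + 1) * (nat j + 1)" by (simp add: card_cartesian_product)
  then show ?thesis using card_image[OF inj] by simp
qed

lemma pdim_bihom:
  "pdim (bihom_part i j :: 'k::field bipoly set) = (if 0 \<le> i \<and> 0 \<le> j then (nat i + 1) * (nat j + 1) else 0)"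
proof (cases "0 \<le> i \<and> 0 \<le> j")
  case True
  have "mbasis i j \<subseteq> (bihom_part i j :: 'k bipoly set)" by (auto simp: mbasis_def bihom_part_def)
  then have "card (mbasis i j :: 'k bipoly set) = pv.dim (bihom_part i j :: 'k bipoly set)"
    by (rule pv.basis_card_eq_dim[OF _ bihom_span_mbasis mbasis_indep])
  moreover have "card (mbasis i j :: 'k bipoly set) = card {m :: var \<Rightarrow>\<^sub>0 nat. bideg m = (i, j)}"
    unfolding mbasis_def by (rule card_image) (auto simp: inj_on_def intro: sg_key_inj)
  ultimately show ?thesis using True card_mbasis_aux[of i j] by (simp add: pdim_eq)
next
  case False
  then have "(bihom_part i j :: 'k bipoly set) = {0}" using bihom_neg[of i j] by auto
  then show ?thesis using False by (simp add: pdim_eq pv.dim_zero_space)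
qed

definition emb :: "var \<Rightarrow> 'k::zero bipoly \<Rightarrow> 'k omega" where
  "emb u F = (\<lambda>v. if v = u then F else 0)"

lemma emb_linear: "Vector_Spaces.linear psmult osmult (emb u :: 'k::field bipoly \<Rightarrow> 'k omega)"
  unfolding Vector_Spaces.linear_iff using vs_psmult vs_osmult
  by (auto simp: emb_def osmult_def fun_eq_iff)

definition Wset :: "(var \<Rightarrow> 'k::zero bipoly set) \<Rightarrow> var set \<Rightarrow> 'k omega set" where
  "Wset V U = {w. \<forall>v. w v \<in> (if v \<in> U then V v else {0})}"

lemma ov_subspace_W:
  assumes "\<And>v. pv.subspace (V v :: 'k::field bipoly set)"
  shows "ov.subspace (Wset V U)"
  unfolding ov.subspace_def Wset_def using assms
  by (auto simp: osmult_def pv.subspace_0 pv.subspace_add pv.subspace_scale)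

lemma Wset_dim:
  fixes V :: "var \<Rightarrow> 'k::field bipoly set"
  assumes "\<And>v. pv.fds (V v)" "finite U"
  shows "ov.fds (Wset V U) \<and> ov.dim (Wset V U) = (\<Sum>v\<in>U. pv.dim (V v))"
  using assms(2)
proof (induction U rule: finite_induct)
  case empty
  have "Wset V {} = {0}" by (auto simp: Wset_def fun_eq_iff)
  then show ?case by (simp add: ov.fds_zero ov.dim_zero_space)
next
  case (insert u U)
  have sV: "pv.subspace (V v)" for v using assms(1) by (simp add: pv.fds_def)
  let ?E = "emb u ` V u"
  have fE: "ov.fds ?E" by (rule po.fds_image[OF emb_linear assms(1)])
  have dE: "ov.dim ?E = pv.dim (V u)"
    by (rule po.dim_inj_image[OF emb_linear assms(1)]) (auto simp: emb_def fun_eq_iff dest: spec[of _ u])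
  have eq: "Wset V (insert u U) = {x + y | x y. x \<in> ?E \<and> y \<in> Wset V U}"
  proof
    show "Wset V (insert u U) \<subseteq> {x + y | x y. x \<in> ?E \<and> y \<in> Wset V U}"
    proof
      fix w assume w: "w \<in> Wset V (insert u U)"
      let ?x = "emb u (w u)" and ?y = "w(u := 0)"
      have wv: "w v \<in> (if v \<in> insert u U then V v else {0})" for v using w by (simp add: Wset_def)
      have "?x \<in> ?E" using wv[of u] by simp
      moreover have "?y \<in> Wset V U" unfolding Wset_def
      proof (intro CollectI allI)
        fix v show "?y v \<in> (if v \<in> U then V v else {0})"
        proof (cases "v = u")
          case True then show ?thesis using insert(2) by simp
        next
          case False then show ?thesis using wv[of v] by simp
        qed
      qed
      moreover have "w = ?x + ?y" by (auto simp: emb_def fun_eq_iff)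
      ultimately show "w \<in> {x + y | x y. x \<in> ?E \<and> y \<in> Wset V U}" by blast
    qed
    show "{x + y | x y. x \<in> ?E \<and> y \<in> Wset V U} \<subseteq> Wset V (insert u U)"
    proof
      fix w assume "w \<in> {x + y | x y. x \<in> ?E \<and> y \<in> Wset V U}"
      then obtain F y where Fy: "w = emb u F + y" "F \<in> V u" "y \<in> Wset V U" by blast
      show "w \<in> Wset V (insert u U)" unfolding Wset_def
      proof (intro CollectI allI)
        fix v
        show "w v \<in> (if v \<in> insert u U then V v else {0})"
        proof (cases "v = u")
          case True
          then have "y v = 0" using Fy(3) insert(2) by (auto simp: Wset_def dest: spec[of _ v])
          then show ?thesis using True Fy by (simp add: emb_def)
        next
          case False
          then show ?thesis using Fy(3) Fy(1) by (auto simp: Wset_def emb_def dest: spec[of _ v])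
        qed
      qed
    qed
  qed
  have int: "?E \<inter> Wset V U = {0}"
  proof
    show "?E \<inter> Wset V U \<subseteq> {0}"
    proof
      fix w assume "w \<in> ?E \<inter> Wset V U"
      then obtain F where "w = emb u F" "w \<in> Wset V U" by auto
      then have "F = 0" using insert(2) by (auto simp: Wset_def emb_def dest: spec[of _ u])
      then show "w \<in> {0}" using \<open>w = emb u F\<close> by (simp add: emb_def fun_eq_iff)
    qed
    have "0 \<in> ?E" using pv.subspace_0[OF sV[of u]] by (intro image_eqI[of _ _ 0]) (auto simp: emb_def fun_eq_iff)
    moreover have "0 \<in> Wset V U" using pv.subspace_0[OF sV] by (simp add: Wset_def)
    ultimately show "{0} \<subseteq> ?E \<inter> Wset V U" by simp
  qed
  have fW: "ov.fds (Wset V U)" using insert.IH by simp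
  have "ov.dim (Wset V (insert u U)) + 0 = ov.dim ?E + ov.dim (Wset V U)"
    using ov.dim_sum_formula[OF fE fW] int eq by (simp add: ov.dim_zero_space)
  moreover have "ov.fds (Wset V (insert u U))" unfolding eq by (rule ov.fds_sum[OF fE fW])
  ultimately show ?case using insert dE by simp
qed

lemma Wset_UNIV: "Wset V UNIV = {w. \<forall>v. w v \<in> V v}"
  by (simp add: Wset_def)

lemma var_UNIV: "(UNIV :: var set) = {X0, X1, Y0, Y1}"
  using var.exhaust by blast

lemma finite_var: "finite (UNIV :: var set)"
  by (simp add: var_UNIV)

lemma sum_var: "(\<Sum>v\<in>UNIV. f v) = f X0 + f X1 + f Y0 + (f Y1 :: 'a::comm_monoid_add)"
  by (simp add: var_UNIV add.assoc)

lemma prod_dim: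
  fixes V :: "var \<Rightarrow> 'k::field bipoly set"
  assumes "\<And>v. pv.fds (V v)"
  shows "ov.fds {w. \<forall>v. w v \<in> V v}" "ov.dim {w. \<forall>v. w v \<in> V v} = pv.dim (V X0) + pv.dim (V X1) + pv.dim (V Y0) + pv.dim (V Y1)"
  using Wset_dim[OF assms finite_var] by (simp_all add: Wset_UNIV sum_var)


definition Aset :: "'k::field bipoly set \<Rightarrow> int \<Rightarrow> int \<Rightarrow> 'k omega set" where
  "Aset I i j = {a. \<forall>v. a v \<in> I \<inter> bihom_part (i - fst (vdeg v)) (j - snd (vdeg v))}"
definition Dset :: "'k::field bipoly set \<Rightarrow> int \<Rightarrow> int \<Rightarrow> 'k omega set" where
  "Dset I i j = dF ` (I \<inter> bihom_part i j)"
definition Rset :: "'k::field bipoly set \<Rightarrow> int \<Rightarrow> int \<Rightarrow> 'k omega set" where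
  "Rset I i j = {x + y | x y. x \<in> Aset I i j \<and> y \<in> Dset I i j}"
definition hideal :: "'k::field bipoly set \<Rightarrow> bool" where
  "hideal I \<longleftrightarrow> isideal I \<and> (\<forall>F\<in>I. \<forall>a b. comp a b F \<in> I)"

lemma sum_extend2:
  assumes "finite B" "A \<subseteq> B"
  shows "(\<Sum>g\<in>A. c g * f g) = (\<Sum>g\<in>B. (if g \<in> A then c g else 0) * (f g :: 'a::comm_ring_1))"
  by (rule sum.mono_neutral_cong_left) (use assms in auto)

lemma omod_gen_base: "g \<in> G \<Longrightarrow> g \<in> omod_gen G"
  unfolding omod_gen_def by (intro CollectI exI[of _ "{g}"] exI[of _ "\<lambda>_. 1"]) auto

lemma omod_gen_add:
  assumes "a \<in> omod_gen G" "b \<in> omod_gen G"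
  shows "a + b \<in> omod_gen G"
proof -
  obtain A c where A: "finite A" "A \<subseteq> G" "a = (\<lambda>v. \<Sum>g\<in>A. c g * g v)" using assms(1) by (auto simp: omod_gen_def)
  obtain B d where B: "finite B" "B \<subseteq> G" "b = (\<lambda>v. \<Sum>g\<in>B. d g * g v)" using assms(2) by (auto simp: omod_gen_def)
  let ?e = "\<lambda>g. (if g \<in> A then c g else 0) + (if g \<in> B then d g else 0)"
  have fab: "finite (A \<union> B)" using A B by simp
  have "a + b = (\<lambda>v. \<Sum>g\<in>A \<union> B. ?e g * g v)"
  proof
    fix v
    have 1: "(\<Sum>g\<in>A. c g * g v) = (\<Sum>g\<in>A \<union> B. (if g \<in> A then c g else 0) * g v)"
      by (rule sum_extend2[OF fab]) simp
    have 2: "(\<Sum>g\<in>B. d g * g v) = (\<Sum>g\<in>A \<union> B. (if g \<in> B then d g else 0) * g v)"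
      by (rule sum_extend2[OF fab]) simp
    show "(a + b) v = (\<Sum>g\<in>A \<union> B. ?e g * g v)"
      unfolding A(3) B(3) plus_fun_apply 1 2 sum.distrib[symmetric] distrib_right ..
  qed
  then show ?thesis unfolding omod_gen_def
    by (intro CollectI exI[of _ "A \<union> B"] exI[of _ ?e]) (use A B in simp)
qed

lemma dF_add: "dF (F + G) = dF F + dF G"
  by (simp add: dF_def fun_eq_iff pderiv_var_add)

lemma dF_zero[simp]: "dF 0 = 0"
  by (simp add: dF_def fun_eq_iff)

lemma dF_linear: "Vector_Spaces.linear psmult osmult (dF :: 'k::field bipoly \<Rightarrow> 'k omega)"
  unfolding Vector_Spaces.linear_iff using vs_psmult vs_osmult
  by (auto simp: dF_add dF_def osmult_def fun_eq_iff pderiv_psmult pderiv_var_add)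

lemma omega_part_eq: "omega_part i j = {w. \<forall>v. w v \<in> bihom_part (i - fst (vdeg v)) (j - snd (vdeg v))}"
  by (simp add: omega_part_def)

lemma Aset_zero: "isideal I \<Longrightarrow> 0 \<in> Aset I i j"
  by (simp add: Aset_def isideal_0)

lemma Aset_add: "isideal I \<Longrightarrow> a \<in> Aset I i j \<Longrightarrow> b \<in> Aset I i j \<Longrightarrow> a + b \<in> Aset I i j"
  by (auto simp: Aset_def intro: isideal_add bihom_add)

lemma Dset_add: "isideal I \<Longrightarrow> a \<in> Dset I i j \<Longrightarrow> b \<in> Dset I i j \<Longrightarrow> a + b \<in> Dset I i j"
proof -
  assume I: "isideal I" and a: "a \<in> Dset I i j" and b: "b \<in> Dset I i j"
  obtain F G where "a = dF F" "b = dF G" "F \<in> I \<inter> bihom_part i j" "G \<in> I \<inter> bihom_part i j"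
    using a b by (auto simp: Dset_def)
  then show ?thesis unfolding Dset_def
    by (intro image_eqI[of _ _ "F + G"]) (auto simp: dF_add intro: isideal_add[OF I] bihom_add)
qed

lemma Dset_zero: "isideal I \<Longrightarrow> 0 \<in> Dset I i j"
  unfolding Dset_def by (intro image_eqI[of _ _ 0]) (auto simp: isideal_0)

lemma Rset_zero: "isideal I \<Longrightarrow> 0 \<in> Rset I i j"
  unfolding Rset_def using Aset_zero[of I i j] Dset_zero[of I i j]
  by (intro CollectI exI[of _ 0] exI[of _ 0]) simp

lemma Rset_add:
  assumes I: "isideal I" and a: "a \<in> Rset I i j" and b: "b \<in> Rset I i j"
  shows "a + b \<in> Rset I i j"
proof -
  obtain x1 y1 x2 y2 where "a = x1 + y1" "b = x2 + y2" "x1 \<in> Aset I i j" "y1 \<in> Dset I i j" "x2 \<in> Aset I i j" "y2 \<in> Dset I i j"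
    using a b by (auto simp: Rset_def)
  moreover have "x1 + y1 + (x2 + y2) = (x1 + x2) + (y1 + y2)" by (simp add: algebra_simps)
  ultimately show ?thesis unfolding Rset_def
    by (intro CollectI exI[of _ "x1 + x2"] exI[of _ "y1 + y2"]) (auto intro: Aset_add[OF I] Dset_add[OF I])
qed

lemma Rset_of_A: "isideal I \<Longrightarrow> x \<in> Aset I i j \<Longrightarrow> x \<in> Rset I i j"
  unfolding Rset_def using Dset_zero[of I i j] by (intro CollectI exI[of _ x] exI[of _ 0]) simp

lemma rel_decomp:
  assumes hI: "hideal I"
  shows "kahler_rel I \<inter> omega_part i j = Rset I i j"
proof
  have I: "isideal I" using hI by (simp add: hideal_def)
  have hom: "\<And>F a b. F \<in> I \<Longrightarrow> comp a b F \<in> I" using hI by (simp add: hideal_def)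
  let ?gens = "{(\<lambda>v. if v = u then F else 0) | u F. F \<in> I} \<union> {dF F | F. F \<in> I}"
  let ?oc = "\<lambda>w. (\<lambda>v. comp (i - fst (vdeg v)) (j - snd (vdeg v)) (w v))"
  show "kahler_rel I \<inter> omega_part i j \<subseteq> Rset I i j"
  proof
    fix w assume w: "w \<in> kahler_rel I \<inter> omega_part i j"
    obtain A c where A: "finite A" "A \<subseteq> ?gens" "w = (\<lambda>v. \<Sum>g\<in>A. c g * g v)"
      using w by (auto simp: kahler_rel_def omod_gen_def)
    have wc: "w = ?oc w" using w by (auto simp: omega_part_def fun_eq_iff comp_id)
    have gen: "?oc (\<lambda>v. c' * g v) \<in> Rset I i j" if g: "g \<in> ?gens" for g c'
    proof (cases "g \<in> {(\<lambda>v. if v = u then F else 0) | u F. F \<in> I}")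
      case True
      then obtain u F where uF: "g = (\<lambda>v. if v = u then F else 0)" "F \<in> I" by auto
      have "?oc (\<lambda>v. c' * g v) \<in> Aset I i j" unfolding Aset_def
      proof (intro CollectI allI)
        fix v show "?oc (\<lambda>v. c' * g v) v \<in> I \<inter> bihom_part (i - fst (vdeg v)) (j - snd (vdeg v))"
          using uF by (auto simp: comp_bihom isideal_0[OF I] intro!: hom isideal_mult[OF I])
      qed
      then show ?thesis by (rule Rset_of_A[OF I])
    next
      case False
      then obtain F where F: "g = dF F" "F \<in> I" using g by auto
      let ?x = "\<lambda>v. - comp (i - fst (vdeg v)) (j - snd (vdeg v)) (pderiv_var v c' * F)"
      let ?G = "comp i j (c' * F)"
      have e: "?oc (\<lambda>v. c' * g v) = ?x + dF ?G"
      proof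
        fix v
        have "c' * pderiv_var v F = pderiv_var v (c' * F) - pderiv_var v c' * F" by (simp add: pderiv_var_mult)
        then show "?oc (\<lambda>v. c' * g v) v = (?x + dF ?G) v"
          by (simp add: F(1) dF_def comp_diff comp_pderiv)
      qed
      have x: "?x \<in> Aset I i j" unfolding Aset_def
        using F(2) by (auto intro!: isideal_uminus[OF I] hom isideal_mult[OF I] bihom_uminus comp_bihom)
      have d: "dF ?G \<in> Dset I i j" unfolding Dset_def
        using F(2) by (intro imageI) (auto intro!: hom isideal_mult[OF I] comp_bihom)
      show ?thesis unfolding Rset_def e using x d
        by (intro CollectI exI[of _ ?x] exI[of _ "dF ?G"]) simp
    qed
    have "?oc (\<lambda>v. \<Sum>g\<in>B. c g * g v) \<in> Rset I i j" if "finite B" "B \<subseteq> ?gens" for B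
      using that
    proof (induction B rule: finite_induct)
      case empty
      have "?oc (\<lambda>v. \<Sum>g\<in>{}. c g * g v) = 0" by (simp add: fun_eq_iff)
      then show ?case using Rset_zero[OF I] by simp
    next
      case (insert g B)
      have "?oc (\<lambda>v. \<Sum>g\<in>insert g B. c g * g v) = ?oc (\<lambda>v. c g * g v) + ?oc (\<lambda>v. \<Sum>g\<in>B. c g * g v)"
        using insert(1,2) by (simp add: fun_eq_iff comp_add)
      then show ?case using gen[of g "c g"] insert Rset_add[OF I] by simp
    qed
    then show "w \<in> Rset I i j" using A wc by simp
  qed
  show "Rset I i j \<subseteq> kahler_rel I \<inter> omega_part i j"
  proof
    fix w assume "w \<in> Rset I i j"
    then obtain x G where xG: "w = x + dF G" "x \<in> Aset I i j" "G \<in> I \<inter> bihom_part i j"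
      by (auto simp: Rset_def Dset_def)
    have xv: "x v \<in> I \<inter> bihom_part (i - fst (vdeg v)) (j - snd (vdeg v))" for v using xG(2) by (simp add: Aset_def)
    have x4: "x = emb X0 (x X0) + emb X1 (x X1) + emb Y0 (x Y0) + emb Y1 (x Y1)"
      by (rule ext, case_tac xa) (simp_all add: emb_def)
    have eg: "emb u (x u) \<in> kahler_rel I" for u
      unfolding kahler_rel_def using xv[of u] by (intro omod_gen_base) (auto simp: emb_def)
    have "x \<in> kahler_rel I" using eg[unfolded kahler_rel_def] unfolding kahler_rel_def by (subst x4) (intro omod_gen_add)
    moreover have "dF G \<in> kahler_rel I" unfolding kahler_rel_def using xG(3) by (intro omod_gen_base) auto
    ultimately have "w \<in> kahler_rel I" unfolding xG(1) kahler_rel_def by (rule omod_gen_add)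
    moreover have "w \<in> omega_part i j" unfolding omega_part_def xG(1)
      using xv xG(3) by (auto simp: dF_def intro: bihom_add bihom_pderiv)
    ultimately show "w \<in> kahler_rel I \<inter> omega_part i j" by simp
  qed
qed

lemma fat_hideal: "hideal (fat_ideal X m)"
  by (simp add: hideal_def fat_ideal_isideal comp_fat_ideal)


lemma lookup_Xv_mult: "lk (Xv v * F) k = (if 1 \<le> lk k v then lk (F :: 'k::comm_ring_1 bipoly) (k - ev v) else 0)"
proof (induction F rule: poly_induct)
  case zero then show ?case by simp
next
  case (single m c)
  have "Xv v * sg m c = sg (ev v + m) c" by (simp add: Xv_def mult_single)
  moreover have "(ev v + m = k) \<longleftrightarrow> (1 \<le> lk k v \<and> k - ev v = m)"
  proof (cases "1 \<le> lk k v")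
    case True
    then show ?thesis using sub_ev_iff[OF True, of m] by (simp add: add.commute)
  next
    case False
    have "lk (ev v + m) v \<ge> 1" by (simp add: lookup_add lk_ev)
    then show ?thesis using False by auto
  qed
  ultimately show ?case by (auto simp: lookup_single when_def)
next
  case (add F G) then show ?case by (simp add: distrib_left lookup_add)
qed

lemma Xv_mult_zero: "Xv v * F = 0 \<Longrightarrow> (F :: 'k::comm_ring_1 bipoly) = 0"
proof (rule poly_mapping_eqI)
  fix n assume "Xv v * F = 0"
  then have "lk (Xv v * F) (n + ev v) = 0" by simp
  moreover have "n + ev v - ev v = n" by (rule poly_mapping_eqI) (simp add: lookup_add lookup_minus)
  ultimately show "lk F n = lk 0 n" by (simp add: lookup_Xv_mult lookup_add lk_ev)
qed

lemma Isub_subspace: "isideal I \<Longrightarrow> pv.subspace (I \<inter> bihom_part i j :: 'k::field bipoly set)"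
  unfolding pv.subspace_def by (auto intro: isideal_0 isideal_add isideal_psmult bihom_add bihom_psmult)

lemma Isub_fds: "isideal I \<Longrightarrow> pv.fds (I \<inter> bihom_part i j :: 'k::field bipoly set)"
  using pv.fds_subset[OF bihom_fds Isub_subspace] by blast

lemma Isub_le: "pv.dim (I \<inter> bihom_part i j :: 'k::field bipoly set) \<le> pv.dim (bihom_part i j :: 'k bipoly set)"
  by (rule pv.fds_dim_mono[OF bihom_fds]) auto

lemma int_HF: "int (HF (I :: 'k::field bipoly set) i j) = int (pv.dim (bihom_part i j :: 'k bipoly set)) - int (pv.dim (I \<inter> bihom_part i j))"
  using Isub_le[of I i j] by (simp add: HF_def pdim_eq of_nat_diff)

lemma kernel_char:
  fixes X :: "'k::field_char_0 pt set"
  assumes valid: "\<forall>P\<in>X. valid_pt P" and pos: "\<forall>P\<in>X. 0 < m P" and G: "G \<in> bihom_part i j"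
  shows "G \<in> fat_ideal X (\<lambda>P. m P + 1) \<longleftrightarrow> G \<in> fat_ideal X m \<and> (\<forall>v. pderiv_var v G \<in> fat_ideal X m)"
proof -
  have "G \<in> ideal_pow (pt_ideal P) (Suc (m P)) \<longleftrightarrow> G \<in> ideal_pow (pt_ideal P) (m P) \<and> (\<forall>v. pderiv_var v G \<in> ideal_pow (pt_ideal P) (m P))"
    if PX: "P \<in> X" for P
  proof -
    have "1 \<le> m P" using pos PX by (simp add: Suc_le_eq)
    then show ?thesis using pow_Suc_iff[of P G i j "m P"] valid G PX by simp
  qed
  then show ?thesis unfolding fat_ideal_def by auto
qed

lemma dF_inj:
  assumes G: "G \<in> bihom_part i j" and i: "i \<noteq> 0" and d: "dF G = (0 :: 'k::field_char_0 omega)"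
  shows "G = 0"
proof -
  have "psmult (of_int i) G = 0" using euler_X[OF G] d by (simp add: dF_def fun_eq_iff)
  then have "of_int i * lk G n = 0" for n by (metis lookup_psmult lookup_zero)
  then show ?thesis using i by (intro poly_mapping_eqI) simp
qed

lemma omega_dim:
  "ov.fds (omega_part i j :: 'k::field omega set)"
  "ov.dim (omega_part i j :: 'k::field omega set) = 2 * pv.dim (bihom_part (i - 1) j :: 'k bipoly set) + 2 * pv.dim (bihom_part i (j - 1) :: 'k bipoly set)"
  using prod_dim[of "\<lambda>v. bihom_part (i - fst (vdeg v)) (j - snd (vdeg v)) :: 'k bipoly set", OF bihom_fds]
  by (simp_all add: omega_part_def vdeg_def)

lemma Aset_dim:
  assumes "isideal (I :: 'k::field bipoly set)"
  shows "ov.fds (Aset I i j)"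
    "ov.dim (Aset I i j) = 2 * pv.dim (I \<inter> bihom_part (i - 1) j) + 2 * pv.dim (I \<inter> bihom_part i (j - 1))"
  using prod_dim[of "\<lambda>v. I \<inter> bihom_part (i - fst (vdeg v)) (j - snd (vdeg v))", OF Isub_fds[OF assms]]
  by (simp_all add: Aset_def vdeg_def)

lemma Rset_sub_omega: "Rset I i j \<subseteq> omega_part i j"
  unfolding Rset_def Aset_def Dset_def omega_part_def
  by (auto simp: dF_def intro!: bihom_add bihom_pderiv)

lemma HF_Omega_rset:
  fixes I :: "'k::field bipoly set"
  assumes "hideal I"
  shows "int (HF_Omega I i j) = int (ov.dim (omega_part i j :: 'k omega set)) - int (ov.dim (Rset I i j))"
proof -
  have "ov.dim (Rset I i j) \<le> ov.dim (omega_part i j :: 'k omega set)"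
    by (rule ov.fds_dim_mono[OF omega_dim(1) Rset_sub_omega])
  then show ?thesis using rel_decomp[OF assms] by (simp add: HF_Omega_def odim_eq of_nat_diff)
qed

lemma HF_Omega_main:
  fixes X :: "'k::field_char_0 pt set"
  assumes valid: "\<forall>P\<in>X. valid_pt P" and pos: "\<forall>P\<in>X. 0 < m P" and i: "1 \<le> i"
  shows "int (HF_Omega (fat_ideal X m) i j) = 2 * int (HF (fat_ideal X m) (i - 1) j) + 2 * int (HF (fat_ideal X m) i (j - 1))
           + int (HF (fat_ideal X m) i j) - int (HF (fat_ideal X (\<lambda>P. m P + 1)) i j)"
proof -
  let ?I = "fat_ideal X m" and ?IV = "fat_ideal X (\<lambda>P. m P + 1)"
  have I: "isideal ?I" by (rule fat_ideal_isideal)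
  have fA: "ov.fds (Aset ?I i j)" by (rule Aset_dim(1)[OF I])
  have fIij: "pv.fds (?I \<inter> bihom_part i j)" by (rule Isub_fds[OF I])
  have fD: "ov.fds (Dset ?I i j)" unfolding Dset_def by (rule po.fds_image[OF dF_linear fIij])
  have injD: "\<And>G. G \<in> ?I \<inter> bihom_part i j \<Longrightarrow> dF G = 0 \<Longrightarrow> G = 0"
    using i by (intro dF_inj[of _ i j]) auto
  have dD: "ov.dim (Dset ?I i j) = pv.dim (?I \<inter> bihom_part i j)"
    unfolding Dset_def by (rule po.dim_inj_image[OF dF_linear fIij injD])
  have AD: "Aset ?I i j \<inter> Dset ?I i j = dF ` (?IV \<inter> bihom_part i j)"
  proof
    show "Aset ?I i j \<inter> Dset ?I i j \<subseteq> dF ` (?IV \<inter> bihom_part i j)"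
    proof
      fix w assume w: "w \<in> Aset ?I i j \<inter> Dset ?I i j"
      then obtain G where G: "w = dF G" "G \<in> ?I" "G \<in> bihom_part i j" by (auto simp: Dset_def)
      have "pderiv_var v G \<in> ?I" for v using w G(1) by (auto simp: Aset_def dF_def)
      then have "G \<in> ?IV" using kernel_char[OF valid pos G(3)] G(2) by simp
      then show "w \<in> dF ` (?IV \<inter> bihom_part i j)" using G by auto
    qed
    show "dF ` (?IV \<inter> bihom_part i j) \<subseteq> Aset ?I i j \<inter> Dset ?I i j"
    proof
      fix w assume "w \<in> dF ` (?IV \<inter> bihom_part i j)"
      then obtain G where G: "w = dF G" "G \<in> ?IV" "G \<in> bihom_part i j" by auto
      then have G2: "G \<in> ?I" "\<And>v. pderiv_var v G \<in> ?I" using kernel_char[OF valid pos G(3)] by auto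
      have "w \<in> Aset ?I i j" unfolding Aset_def G(1) dF_def using G2(2) bihom_pderiv[OF G(3)] by auto
      moreover have "w \<in> Dset ?I i j" unfolding Dset_def G(1) using G2(1) G(3) by auto
      ultimately show "w \<in> Aset ?I i j \<inter> Dset ?I i j" by simp
    qed
  qed
  have fIV: "pv.fds (?IV \<inter> bihom_part i j)" by (rule Isub_fds[OF fat_ideal_isideal])
  have dAD: "ov.dim (Aset ?I i j \<inter> Dset ?I i j) = pv.dim (?IV \<inter> bihom_part i j)"
    unfolding AD by (rule po.dim_inj_image[OF dF_linear fIV]) (use i in \<open>intro dF_inj[of _ i j], auto\<close>)
  have sum: "ov.dim (Rset ?I i j) + ov.dim (Aset ?I i j \<inter> Dset ?I i j) = ov.dim (Aset ?I i j) + ov.dim (Dset ?I i j)"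
    unfolding Rset_def by (rule ov.dim_sum_formula[OF fA fD])
  have "int (HF_Omega ?I i j) = int (ov.dim (omega_part i j :: 'k omega set)) - int (ov.dim (Rset ?I i j))"
    by (rule HF_Omega_rset[OF fat_hideal])
  moreover have e1: "int (ov.dim (Rset ?I i j)) + int (pv.dim (?IV \<inter> bihom_part i j)) =
      2 * int (pv.dim (?I \<inter> bihom_part (i - 1) j)) + 2 * int (pv.dim (?I \<inter> bihom_part i (j - 1))) + int (pv.dim (?I \<inter> bihom_part i j))"
    using arg_cong[OF sum, of int] dAD dD Aset_dim(2)[OF I, of i j] by simp
  moreover have e2: "int (ov.dim (omega_part i j :: 'k omega set)) = 2 * int (pv.dim (bihom_part (i - 1) j :: 'k bipoly set)) + 2 * int (pv.dim (bihom_part i (j - 1) :: 'k bipoly set))"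
    by (simp add: omega_dim(2))
  ultimately show ?thesis
    using int_HF[of ?I "i - 1" j] int_HF[of ?I i "j - 1"] int_HF[of ?I i j] int_HF[of ?IV i j]
    by linarith
qed

lemma HF_Omega_zero_ideal:
  fixes I :: "'k::field bipoly set"
  assumes hI: "hideal I" and z: "I \<inter> bihom_part i j = {0}"
  shows "HF_Omega I i j = 2 * pv.dim (bihom_part (i - 1) j :: 'k bipoly set) + 2 * pv.dim (bihom_part i (j - 1) :: 'k bipoly set)"
proof -
  have I: "isideal I" using hI by (simp add: hideal_def)
  have zv: "I \<inter> bihom_part (i - fst (vdeg v)) (j - snd (vdeg v)) = {0}" for v
  proof
    show "I \<inter> bihom_part (i - fst (vdeg v)) (j - snd (vdeg v)) \<subseteq> {0}"
    proof
      fix F assume F: "F \<in> I \<inter> bihom_part (i - fst (vdeg v)) (j - snd (vdeg v))"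
      have "Xv v * F \<in> I" using F I by (simp add: isideal_mult)
      moreover have "Xv v * F \<in> bihom_part i j" using bihom_mult[OF Xv_bihom[of v], of F "i - fst (vdeg v)" "j - snd (vdeg v)"] F by simp
      ultimately have "Xv v * F = 0" using z by auto
      then show "F \<in> {0}" using Xv_mult_zero by auto
    qed
  qed (simp add: isideal_0[OF I])
  have "Aset I i j = {0}" using zv by (auto simp: Aset_def fun_eq_iff)
  moreover have "Dset I i j = {0}" using z by (simp add: Dset_def)
  ultimately have "Rset I i j = {0}" by (simp add: Rset_def)
  then have "int (HF_Omega I i j) = int (ov.dim (omega_part i j :: 'k omega set))"
    using HF_Omega_rset[OF hI, of i j] by (simp add: ov.dim_zero_space)
  then show ?thesis using omega_dim(2)[of i j] by simp
qed

lemma omega_part_zero: "i < 0 \<or> j < 0 \<or> (i, j) = (0, 0) \<Longrightarrow> omega_part i j = {0}"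
proof -
  assume a: "i < 0 \<or> j < 0 \<or> (i, j) = (0, 0)"
  have z: "bihom_part (i - fst (vdeg v)) (j - snd (vdeg v)) = {0}" for v
    by (rule bihom_neg) (use a in \<open>cases v; auto simp: vdeg_def\<close>)
  show ?thesis
  proof
    show "omega_part i j \<subseteq> {0}"
    proof
      fix w assume w: "w \<in> omega_part i j"
      have "w v = 0" for v using w z[of v] by (auto simp: omega_part_def)
      then show "w \<in> {0}" by (auto simp: fun_eq_iff)
    qed
    show "{0} \<subseteq> omega_part i j" by (simp add: omega_part_def)
  qed
qed


lemma finite_le1: "(\<And>x y. x \<in> S \<Longrightarrow> y \<in> S \<Longrightarrow> x = y) \<Longrightarrow> finite S"
proof (cases "S = {}")
  case False
  then obtain x where "x \<in> S" by auto
  moreover assume "\<And>x y. x \<in> S \<Longrightarrow> y \<in> S \<Longrightarrow> x = y"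
  ultimately have "S \<subseteq> {x}" by auto
  then show ?thesis by (rule finite_subset) simp
qed simp

lemma exists_t:
  fixes f g :: "'a \<Rightarrow> 'k::field_char_0"
  assumes "finite X" "\<forall>P\<in>X. (f P, g P) \<noteq> (0, 0)"
  shows "\<exists>t. \<forall>P\<in>X. f P + t * g P \<noteq> 0"
proof -
  let ?bad = "\<lambda>P. {k::nat. f P + of_nat k * g P = 0}"
  have fin: "finite (?bad P)" if PX: "P \<in> X" for P
  proof (rule finite_le1)
    fix k1 k2 assume k: "k1 \<in> ?bad P" "k2 \<in> ?bad P"
    have "g P \<noteq> 0"
    proof
      assume "g P = 0"
      then have "f P = 0" using k(1) by (auto split: if_splits)
      then show False using assms(2) PX \<open>g P = 0\<close> by auto
    qed
    moreover have "of_nat k1 * g P = of_nat k2 * g P"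
    proof -
      have "f P + of_nat k1 * g P = 0" "f P + of_nat k2 * g P = 0" using k by auto
      then show ?thesis by (metis add_left_cancel)
    qed
    ultimately show "k1 = k2" by simp
  qed
  have "finite (\<Union>P\<in>X. ?bad P)" using assms(1) fin by blast
  then obtain k where "k \<notin> (\<Union>P\<in>X. ?bad P)" using ex_new_if_finite[OF infinite_UNIV_nat] by blast
  then show ?thesis by (intro exI[of _ "of_nat k"]) auto
qed

definition lin :: "var \<Rightarrow> var \<Rightarrow> 'k::field \<Rightarrow> 'k bipoly" where
  "lin a b t = Xv a + psmult t (Xv b)"

lemma lin_mult: "lin a b t * F = Xv a * F + psmult t (Xv b * F)"
  by (simp add: lin_def distrib_right psmult_conv mult.assoc)

lemma peval_lin: "peval (lin X0 X1 t) P = fst (fst P) + t * snd (fst P)"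
  "peval (lin Y0 Y1 t) P = fst (snd P) + t * snd (snd P)"
  by (simp_all add: lin_def peval_add peval_psmult peval_Xv)

lemma lin_bihom: "lin X0 X1 t \<in> bihom_part 1 0" "lin Y0 Y1 t \<in> bihom_part 0 1"
proof -
  show "lin X0 X1 t \<in> bihom_part 1 0" unfolding lin_def
    using Xv_bihom[of X0] Xv_bihom[of X1] by (intro bihom_add bihom_psmult) (simp_all add: vdeg_def)
  show "lin Y0 Y1 t \<in> bihom_part 0 1" unfolding lin_def
    using Xv_bihom[of Y0] Xv_bihom[of Y1] by (intro bihom_add bihom_psmult) (simp_all add: vdeg_def)
qed

lemma lin_inj:
  assumes ab: "a \<noteq> b" and z: "lin a b t * F = (0 :: 'k::field bipoly)"
  shows "F = 0"
proof (rule ccontr)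
  assume F: "F \<noteq> 0"
  then have ne: "kz F \<noteq> {}" by simp
  let ?M = "Max ((\<lambda>n. lk n a) ` kz F)"
  have "?M \<in> (\<lambda>n. lk n a) ` kz F" by (rule Max_in) (simp_all add: F)
  then obtain n where n: "n \<in> kz F" "lk n a = ?M" by auto
  have le: "lk n' a \<le> lk n a" if "n' \<in> kz F" for n' using n(2) that by simp
  let ?k = "n + ev a"
  have k1: "?k - ev a = n" by (rule poly_mapping_eqI) (simp add: lookup_add lookup_minus)
  have 1: "lk (Xv a * F) ?k = lk F n" by (simp add: lookup_Xv_mult lookup_add lk_ev k1)
  have 2: "lk (Xv b * F) ?k = 0"
  proof (cases "1 \<le> lk ?k b")
    case True
    have "lk (?k - ev b) a = lk n a + 1" using ab by (simp add: lookup_minus lookup_add lk_ev)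
    then have "?k - ev b \<notin> kz F" using le by fastforce
    then show ?thesis using True by (simp add: lookup_Xv_mult in_keys_iff)
  qed (simp add: lookup_Xv_mult)
  have "lk (lin a b t * F) ?k = lk F n" by (simp add: lin_mult lookup_add 1 2)
  then show False using z n(1) by (simp add: in_keys_iff)
qed

lemma mult_linear: "Vector_Spaces.linear psmult psmult (\<lambda>F. (L :: 'k::field bipoly) * F)"
  unfolding Vector_Spaces.linear_iff using vs_psmult
  by (auto simp: distrib_left psmult_conv mult.left_commute)

definition sumset :: "'k::field bipoly \<Rightarrow> 'k bipoly set \<Rightarrow> int \<Rightarrow> int \<Rightarrow> int \<Rightarrow> int \<Rightarrow> 'k bipoly set" where
  "sumset L I a b i j = {x + y | x y. x \<in> (\<lambda>F. L * F) ` bihom_part (i - a) (j - b) \<and> y \<in> I \<inter> bihom_part i j}"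

lemma sumset_add:
  assumes I: "isideal I" and x: "x \<in> sumset L I a b i j" and y: "y \<in> sumset L I a b i j"
  shows "x + y \<in> sumset L I a b i j"
proof -
  obtain F1 H1 F2 H2 where "x = L * F1 + H1" "y = L * F2 + H2" "F1 \<in> bihom_part (i - a) (j - b)" "F2 \<in> bihom_part (i - a) (j - b)"
    "H1 \<in> I \<inter> bihom_part i j" "H2 \<in> I \<inter> bihom_part i j" using x y by (auto simp: sumset_def)
  moreover have "L * F1 + H1 + (L * F2 + H2) = L * (F1 + F2) + (H1 + H2)" by (simp add: algebra_simps)
  ultimately show ?thesis unfolding sumset_def
    by (intro CollectI exI[of _ "L * (F1 + F2)"] exI[of _ "H1 + H2"]) (auto intro: bihom_add isideal_add[OF I])
qed

lemma sumset_I: "isideal I \<Longrightarrow> H \<in> I \<inter> bihom_part i j \<Longrightarrow> H \<in> sumset L I a b i j"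
  unfolding sumset_def by (intro CollectI exI[of _ 0] exI[of _ H]) (auto intro: image_eqI[of _ _ 0])

lemma sumset_mult:
  assumes I: "isideal I" and N: "N \<in> bihom_part c d" and x: "x \<in> sumset L I a b i j"
  shows "N * x \<in> sumset L I a b (i + c) (j + d)"
proof -
  obtain F H where FH: "x = L * F + H" "F \<in> bihom_part (i - a) (j - b)" "H \<in> I \<inter> bihom_part i j"
    using x by (auto simp: sumset_def)
  have "N * x = L * (N * F) + N * H" unfolding FH(1) by (simp add: algebra_simps)
  moreover have "N * F \<in> bihom_part (i + c - a) (j + d - b)"
    using bihom_mult[OF N FH(2)] by (simp add: algebra_simps)
  moreover have "N * H \<in> I \<inter> bihom_part (i + c) (j + d)"
    using bihom_mult[OF N, of H i j] FH(3) isideal_mult[OF I] by (auto simp: algebra_simps)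
  ultimately show ?thesis unfolding sumset_def by blast
qed

lemma sumset_sub: "isideal I \<Longrightarrow> L \<in> bihom_part a b \<Longrightarrow> sumset L I a b i j \<subseteq> bihom_part i j"
  unfolding sumset_def using bihom_mult[of L a b] by (force intro: bihom_add)

lemma stab_dim:
  fixes X :: "'k::field_char_0 pt set"
  assumes valid: "\<forall>P\<in>X. valid_pt P" and Lh: "L \<in> bihom_part a b"
    and Lnz: "\<forall>P\<in>X. peval L P \<noteq> 0" and Linj: "\<And>F. L * F = 0 \<Longrightarrow> F = 0"
  shows "HF (fat_ideal X m) (i - a) (j - b) = HF (fat_ideal X m) i j \<longleftrightarrow> bihom_part i j \<subseteq> sumset L (fat_ideal X m) a b i j"
proof -
  let ?I = "fat_ideal X m"
  have I: "isideal ?I" by (rule fat_ideal_isideal)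
  let ?A = "(\<lambda>F. L * F) ` bihom_part (i - a) (j - b)" and ?B = "?I \<inter> bihom_part i j"
  have fA: "pv.fds ?A" by (rule pp.fds_image[OF mult_linear bihom_fds])
  have dA: "pv.dim ?A = pv.dim (bihom_part (i - a) (j - b) :: 'k bipoly set)"
    by (rule pp.dim_inj_image[OF mult_linear bihom_fds]) (use Linj in auto)
  have fB: "pv.fds ?B" by (rule Isub_fds[OF I])
  have AB: "?A \<inter> ?B = (\<lambda>F. L * F) ` (?I \<inter> bihom_part (i - a) (j - b))"
  proof
    show "?A \<inter> ?B \<subseteq> (\<lambda>F. L * F) ` (?I \<inter> bihom_part (i - a) (j - b))"
    proof
      fix x assume "x \<in> ?A \<inter> ?B"
      then obtain F where F: "x = L * F" "F \<in> bihom_part (i - a) (j - b)" "L * F \<in> ?I" by auto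
      have "F \<in> ideal_pow (pt_ideal P) (m P)" if PX: "P \<in> X" for P
        using pow_nzd[of P L F "i - a" "j - b" "m P"] valid Lnz F(2,3) PX by (auto simp: fat_ideal_def)
      then have "F \<in> ?I" by (simp add: fat_ideal_def)
      then show "x \<in> (\<lambda>F. L * F) ` (?I \<inter> bihom_part (i - a) (j - b))" using F by auto
    qed
    show "(\<lambda>F. L * F) ` (?I \<inter> bihom_part (i - a) (j - b)) \<subseteq> ?A \<inter> ?B"
      using bihom_mult[OF Lh, of _ "i - a" "j - b"] isideal_mult[OF I] by auto
  qed
  have dAB: "pv.dim (?A \<inter> ?B) = pv.dim (?I \<inter> bihom_part (i - a) (j - b))"
    unfolding AB by (rule pp.dim_inj_image[OF mult_linear Isub_fds[OF I]]) (use Linj in auto)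
  have sf: "pv.dim (sumset L ?I a b i j) + pv.dim (?A \<inter> ?B) = pv.dim ?A + pv.dim ?B"
    unfolding sumset_def by (rule pv.dim_sum_formula[OF fA fB])
  have sub: "sumset L ?I a b i j \<subseteq> bihom_part i j" by (rule sumset_sub[OF I Lh])
  have ssub: "pv.subspace (sumset L ?I a b i j)"
    unfolding sumset_def using fA fB by (intro pv.subspace_sums) (auto simp: pv.fds_def)
  have e: "int (pv.dim (sumset L ?I a b i j)) = int (HF ?I (i - a) (j - b)) + int (pv.dim ?B)"
    using arg_cong[OF sf, of int] dAB dA int_HF[of ?I "i - a" "j - b"] by simp
  have "HF ?I (i - a) (j - b) = HF ?I i j \<longleftrightarrow> pv.dim (sumset L ?I a b i j) = pv.dim (bihom_part i j :: 'k bipoly set)"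
    using e int_HF[of ?I i j] by linarith
  also have "\<dots> \<longleftrightarrow> sumset L ?I a b i j = bihom_part i j"
    using pv.fds_dim_eq[OF bihom_fds ssub sub] by auto
  also have "\<dots> \<longleftrightarrow> bihom_part i j \<subseteq> sumset L ?I a b i j" using sub by auto
  finally show ?thesis .
qed

lemma split_X:
  assumes "F \<in> bihom_part i j" "i \<noteq> 0"
  shows "\<exists>F0 F1. F0 \<in> bihom_part (i - 1) j \<and> F1 \<in> bihom_part (i - 1) j \<and> F = Xv X0 * F0 + Xv X1 * (F1 :: 'k::field_char_0 bipoly)"
proof -
  let ?c = "inverse (of_int i :: 'k)"
  have "psmult ?c (psmult (of_int i) F) = F" using assms(2) by (simp add: psmult_psmult psmult_one)
  then have "F = Xv X0 * psmult ?c (pderiv_var X0 F) + Xv X1 * psmult ?c (pderiv_var X1 F)"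
    unfolding euler_X[OF assms(1), symmetric] by (simp add: psmult_conv algebra_simps)
  moreover have "psmult ?c (pderiv_var v F) \<in> bihom_part (i - 1) j" if "v = X0 \<or> v = X1" for v
    using bihom_pderiv[OF assms(1), of v] that by (intro bihom_psmult) (auto simp: vdeg_def)
  ultimately show ?thesis by blast
qed

lemma split_Y:
  assumes "F \<in> bihom_part i j" "j \<noteq> 0"
  shows "\<exists>F0 F1. F0 \<in> bihom_part i (j - 1) \<and> F1 \<in> bihom_part i (j - 1) \<and> F = Xv Y0 * F0 + Xv Y1 * (F1 :: 'k::field_char_0 bipoly)"
proof -
  let ?c = "inverse (of_int j :: 'k)"
  have "psmult ?c (psmult (of_int j) F) = F" using assms(2) by (simp add: psmult_psmult psmult_one)
  then have "F = Xv Y0 * psmult ?c (pderiv_var Y0 F) + Xv Y1 * psmult ?c (pderiv_var Y1 F)"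
    unfolding euler_Y[OF assms(1), symmetric] by (simp add: psmult_conv algebra_simps)
  moreover have "psmult ?c (pderiv_var v F) \<in> bihom_part i (j - 1)" if "v = Y0 \<or> v = Y1" for v
    using bihom_pderiv[OF assms(1), of v] that by (intro bihom_psmult) (auto simp: vdeg_def)
  ultimately show ?thesis by blast
qed

lemma stab_next_X:
  assumes I: "isideal (I :: 'k::field_char_0 bipoly set)" and st: "bihom_part i j \<subseteq> sumset L I a b i j" and i: "i + 1 \<noteq> 0"
  shows "bihom_part (i + 1) j \<subseteq> sumset L I a b (i + 1) j"
proof
  fix F :: "'k bipoly" assume "F \<in> bihom_part (i + 1) j"
  then obtain F0 F1 where F: "F0 \<in> bihom_part i j" "F1 \<in> bihom_part i j" "F = Xv X0 * F0 + Xv X1 * F1"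
    using split_X[of F "i + 1" j] i by auto
  have "Xv v * G \<in> sumset L I a b (i + 1) j" if "v = X0 \<or> v = X1" "G \<in> bihom_part i j" for v G
    using sumset_mult[OF I Xv_bihom[of v], of G L a b i j] st that by (auto simp: vdeg_def)
  then show "F \<in> sumset L I a b (i + 1) j" unfolding F(3) using F(1,2) by (intro sumset_add[OF I]) auto
qed

lemma stab_next_Y:
  assumes I: "isideal (I :: 'k::field_char_0 bipoly set)" and st: "bihom_part i j \<subseteq> sumset L I a b i j" and j: "j + 1 \<noteq> 0"
  shows "bihom_part i (j + 1) \<subseteq> sumset L I a b i (j + 1)"
proof
  fix F :: "'k bipoly" assume "F \<in> bihom_part i (j + 1)"
  then obtain F0 F1 where F: "F0 \<in> bihom_part i j" "F1 \<in> bihom_part i j" "F = Xv Y0 * F0 + Xv Y1 * F1"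
    using split_Y[of F i "j + 1"] j by auto
  have "Xv v * G \<in> sumset L I a b i (j + 1)" if "v = Y0 \<or> v = Y1" "G \<in> bihom_part i j" for v G
    using sumset_mult[OF I Xv_bihom[of v], of G L a b i j] st that by (auto simp: vdeg_def)
  then show "F \<in> sumset L I a b i (j + 1)" unfolding F(3) using F(1,2) by (intro sumset_add[OF I]) auto
qed

lemma stab_cross:
  assumes I: "isideal (I :: 'k::field bipoly set)" and st: "bihom_part i j \<subseteq> sumset L I a b i j"
    and st2: "bihom_part (i + c) (j + d) \<subseteq> sumset M I c d (i + c) (j + d)" and Mh: "M \<in> bihom_part c d"
  shows "bihom_part (i + c) (j + d) \<subseteq> sumset L I a b (i + c) (j + d)"
proof
  fix F :: "'k bipoly" assume "F \<in> bihom_part (i + c) (j + d)"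
  then obtain G H where GH: "F = M * G + H" "G \<in> bihom_part i j" "H \<in> I \<inter> bihom_part (i + c) (j + d)"
    using st2 by (auto simp: sumset_def)
  have "M * G \<in> sumset L I a b (i + c) (j + d)" using sumset_mult[OF I Mh, of G] st GH(2) by auto
  moreover have "H \<in> sumset L I a b (i + c) (j + d)" by (rule sumset_I[OF I GH(3)])
  ultimately show "F \<in> sumset L I a b (i + c) (j + d)" unfolding GH(1) by (rule sumset_add[OF I])
qed


lemma isideal_UNIV: "isideal (UNIV :: 'k::comm_ring_1 bipoly set)"
  by (rule isidealI) auto

lemma hideal_UNIV: "hideal (UNIV :: 'k::field bipoly set)"
  by (simp add: hideal_def isideal_UNIV)

lemma fat_empty: "fat_ideal {} m = UNIV"
  by (simp add: fat_ideal_def)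

lemma HF_UNIV: "HF (UNIV :: 'k::field bipoly set) i j = 0"
  by (simp add: HF_def)

lemma Rset_UNIV: "Rset (UNIV :: 'k::field bipoly set) i j = omega_part i j"
proof
  show "Rset UNIV i j \<subseteq> omega_part i j" by (rule Rset_sub_omega)
  show "omega_part i j \<subseteq> Rset (UNIV :: 'k bipoly set) i j"
  proof
    fix x :: "'k omega" assume "x \<in> omega_part i j"
    then have "x \<in> Aset UNIV i j" by (simp add: Aset_def omega_part_def)
    then show "x \<in> Rset UNIV i j" by (rule Rset_of_A[OF isideal_UNIV])
  qed
qed

lemma HF_Omega_UNIV: "HF_Omega (UNIV :: 'k::field bipoly set) i j = 0"
  using HF_Omega_rset[OF hideal_UNIV, of i j] by (simp add: Rset_UNIV)

lemma HF_neg: "i < 0 \<or> j < 0 \<Longrightarrow> HF (I :: 'k::field bipoly set) i j = 0"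
proof -
  assume "i < 0 \<or> j < 0"
  then have "(bihom_part i j :: 'k bipoly set) = {0}" by (rule bihom_neg)
  then show ?thesis by (simp add: HF_def pdim_eq pv.dim_zero_space)
qed

lemma mono_Y: "sg (sg Y0 j) 1 \<in> bihom_part 0 (int j)" "sg (sg Y1 j) 1 \<in> bihom_part 0 (int j)"
  "sg (sg X0 j) 1 \<in> bihom_part (int j) 0" "sg (sg X1 j) 1 \<in> bihom_part (int j) 0"
  by (simp_all add: bihom_part_def bideg_def lookup_single)

lemma HF_full_contra:
  fixes X :: "'k::field_char_0 pt set"
  assumes valid: "\<forall>P\<in>X. valid_pt P" and pos: "\<forall>P\<in>X. 0 < m P" and P: "P \<in> X"
    and F: "F \<in> bihom_part i j" "peval F P \<noteq> 0"
  shows "HF (fat_ideal X m) i j \<noteq> 0"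
proof
  assume h: "HF (fat_ideal X m) i j = 0"
  let ?I = "fat_ideal X m"
  have "pv.dim (bihom_part i j :: 'k bipoly set) \<le> pv.dim (?I \<inter> bihom_part i j)"
    using h by (simp add: HF_def pdim_eq)
  then have "pv.dim (?I \<inter> bihom_part i j) = pv.dim (bihom_part i j :: 'k bipoly set)"
    using Isub_le[of ?I i j] by simp
  moreover have "?I \<inter> bihom_part i j \<subseteq> bihom_part i j" by auto
  ultimately have "?I \<inter> bihom_part i j = bihom_part i j"
    using pv.fds_dim_eq[OF bihom_fds Isub_subspace[OF fat_ideal_isideal]] by blast
  then have "F \<in> ideal_pow (pt_ideal P) (m P)" using F(1) P by (auto simp: fat_ideal_def)
  then have "F \<in> Dm P (m P)" using pow_Dm by blast
  moreover obtain k where "m P = Suc k" using pos P by (cases "m P") auto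
  ultimately show False using F(2) by (simp add: Dm_Suc)
qed

lemma HF0_nonzero:
  fixes X :: "'k::field_char_0 pt set"
  assumes valid: "\<forall>P\<in>X. valid_pt P" and pos: "\<forall>P\<in>X. 0 < m P" and ne: "X \<noteq> {}"
  shows "HF (fat_ideal X m) 0 (int j) \<noteq> 0" "HF (fat_ideal X m) (int j) 0 \<noteq> 0"
proof -
  obtain P where P: "P \<in> X" using ne by auto
  have v: "fst P \<noteq> (0, 0)" "snd P \<noteq> (0, 0)" using valid P by (auto simp: valid_pt_def)
  have ev: "peval (sg (sg v j) 1) P = mon (sg v j) P" for v :: var by (simp add: peval_single)
  show "HF (fat_ideal X m) 0 (int j) \<noteq> 0"
  proof (cases "fst (snd P) ^ j = 0")
    case True
    then have "snd (snd P) ^ j \<noteq> 0" using v(2) by (cases "snd P") auto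
    then show ?thesis using HF_full_contra[OF valid pos P mono_Y(2)[of j]] ev[of Y1]
      by (simp add: mon_def lookup_single)
  next
    case False
    then show ?thesis using HF_full_contra[OF valid pos P mono_Y(1)[of j]] ev[of Y0]
      by (simp add: mon_def lookup_single)
  qed
  show "HF (fat_ideal X m) (int j) 0 \<noteq> 0"
  proof (cases "fst (fst P) ^ j = 0")
    case True
    then have "snd (fst P) ^ j \<noteq> 0" using v(1) by (cases "fst P") auto
    then show ?thesis using HF_full_contra[OF valid pos P mono_Y(4)[of j]] ev[of X1]
      by (simp add: mon_def lookup_single)
  next
    case False
    then show ?thesis using HF_full_contra[OF valid pos P mono_Y(3)[of j]] ev[of X0]
      by (simp add: mon_def lookup_single)
  qed
qed

definition rowst :: "'k::field bipoly \<Rightarrow> 'k bipoly set \<Rightarrow> nat \<Rightarrow> nat \<Rightarrow> bool" where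
  "rowst L I i j \<longleftrightarrow> bihom_part (int i) (int j) \<subseteq> sumset L I 1 0 (int i) (int j)"
definition colst :: "'k::field bipoly \<Rightarrow> 'k bipoly set \<Rightarrow> nat \<Rightarrow> nat \<Rightarrow> bool" where
  "colst M I i j \<longleftrightarrow> bihom_part (int i) (int j) \<subseteq> sumset M I 0 1 (int i) (int j)"

lemma rowX: "isideal (I :: 'k::field_char_0 bipoly set) \<Longrightarrow> rowst L I i j \<Longrightarrow> rowst L I (Suc i) j"
  unfolding rowst_def using stab_next_X[of I "int i" "int j" L 1 0] by (simp add: add.commute)

lemma colY: "isideal (I :: 'k::field_char_0 bipoly set) \<Longrightarrow> colst M I i j \<Longrightarrow> colst M I i (Suc j)"
  unfolding colst_def using stab_next_Y[of I "int i" "int j" M 0 1] by (simp add: add.commute)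

lemma rowY: "isideal (I :: 'k::field_char_0 bipoly set) \<Longrightarrow> M \<in> bihom_part 0 1 \<Longrightarrow> rowst L I i j \<Longrightarrow> colst M I i (Suc j) \<Longrightarrow> rowst L I i (Suc j)"
  unfolding rowst_def colst_def using stab_cross[of I "int i" "int j" L 1 0 0 1 M] by (simp add: add.commute)

lemma colX: "isideal (I :: 'k::field_char_0 bipoly set) \<Longrightarrow> L \<in> bihom_part 1 0 \<Longrightarrow> colst M I i j \<Longrightarrow> rowst L I (Suc i) j \<Longrightarrow> colst M I (Suc i) j"
  unfolding rowst_def colst_def using stab_cross[of I "int i" "int j" M 0 1 1 0 L] by (simp add: add.commute)

lemma chain:
  fixes I :: "'k::field_char_0 bipoly set"
  assumes I: "isideal I" and Lh: "L \<in> bihom_part 1 0" and Mh: "M \<in> bihom_part 0 1"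
    and r0: "rowst L I i0 j0" and c0: "colst M I i0 j0" and ij: "i0 \<le> i" "j0 \<le> j"
  shows "rowst L I i j \<and> colst M I i j"
proof -
  have colA: "colst M I i0 j'" if "j0 \<le> j'" for j'
    using that
  proof (induction j' rule: dec_induct)
    case base show ?case by (rule c0)
  next
    case (step n) show ?case by (rule colY[OF I step.IH])
  qed
  have rowA: "rowst L I i0 j'" if "j0 \<le> j'" for j'
    using that
  proof (induction j' rule: dec_induct)
    case base show ?case by (rule r0)
  next
    case (step n) show ?case by (rule rowY[OF I Mh step.IH colA]) (use step in simp)
  qed
  have rowC: "rowst L I i' j'" if "i0 \<le> i'" "j0 \<le> j'" for i' j'
    using that(1)
  proof (induction i' rule: dec_induct)
    case base show ?case by (rule rowA[OF that(2)])
  next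
    case (step n) show ?case by (rule rowX[OF I step.IH])
  qed
  have colB: "colst M I i' j0" if "i0 \<le> i'" for i'
    using that
  proof (induction i' rule: dec_induct)
    case base show ?case by (rule c0)
  next
    case (step n) show ?case by (rule colX[OF I Lh step.IH rowC]) (use step in simp_all)
  qed
  have colC: "colst M I i' j'" if "i0 \<le> i'" "j0 \<le> j'" for i' j'
    using that(2)
  proof (induction j' rule: dec_induct)
    case base show ?case by (rule colB[OF that(1)])
  next
    case (step n) show ?case by (rule colY[OF I step.IH])
  qed
  show ?thesis using rowC colC ij by blast
qed


theorem proposition3p9:
  fixes X :: "'k::field_char_0 pt set" and m :: "'k pt \<Rightarrow> nat"
  assumes "finite X"
    and "\<forall>P\<in>X. valid_pt P"
    and "\<forall>P\<in>X. \<forall>Q\<in>X. same_pt P Q \<longrightarrow> P = Q"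
    and "\<forall>P\<in>X. 0 < m P"
  shows "(\<forall>i j. (\<not> (0 \<le> i \<and> 0 \<le> j) \<or> (i, j) = (0, 0)) \<longrightarrow> HF_Omega (fat_ideal X m) i j = 0)
    \<and> (\<forall>i j :: nat. pdim (fat_ideal X m \<inter> bihom_part (int i) (int j)) = 0 \<longrightarrow>
          HF_Omega (fat_ideal X m) (int i) (int j) = 4 * i * j + 2 * i + 2 * j)
    \<and> (\<forall>i0 j0 :: nat.
          HF (fat_ideal X m) (int i0 - 1) (int j0) = HF (fat_ideal X m) (int i0) (int j0)
          \<and> HF (fat_ideal X m) (int i0) (int j0) = HF (fat_ideal X m) (int i0) (int j0 - 1)
          \<longrightarrow> (\<forall>i j :: nat. i0 \<le> i \<and> j0 \<le> j \<longrightarrow>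
                int (HF_Omega (fat_ideal X m) (int i) (int j))
                  = 5 * int (HF (fat_ideal X m) (int i) (int j))
                    - int (HF (fat_ideal X (\<lambda>P. m P + 1)) (int i) (int j))))"
proof -
  let ?I = "fat_ideal X m" and ?IV = "fat_ideal X (\<lambda>P. m P + 1)"
  have valid: "\<forall>P\<in>X. valid_pt P" and pos: "\<forall>P\<in>X. 0 < m P" using assms by auto
  have A: "\<forall>i j. (\<not> (0 \<le> i \<and> 0 \<le> j) \<or> (i, j) = (0, 0)) \<longrightarrow> HF_Omega ?I i j = 0"
  proof (intro allI impI)
    fix i j :: int assume a: "\<not> (0 \<le> i \<and> 0 \<le> j) \<or> (i, j) = (0, 0)"
    then have "omega_part i j = ({0} :: 'k omega set)" by (intro omega_part_zero) auto
    then show "HF_Omega ?I i j = 0" by (simp add: HF_Omega_def odim_eq ov.dim_zero_space)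
  qed
  have B: "\<forall>i j :: nat. pdim (?I \<inter> bihom_part (int i) (int j)) = 0 \<longrightarrow>
          HF_Omega ?I (int i) (int j) = 4 * i * j + 2 * i + 2 * j"
  proof (intro allI impI)
    fix i j :: nat assume z: "pdim (?I \<inter> bihom_part (int i) (int j)) = 0"
    have "?I \<inter> bihom_part (int i) (int j) = {0}"
      using pv.fds_dim0[OF Isub_fds[OF fat_ideal_isideal]] z by (simp add: pdim_eq)
    then have "HF_Omega ?I (int i) (int j) = 2 * pv.dim (bihom_part (int i - 1) (int j) :: 'k bipoly set) + 2 * pv.dim (bihom_part (int i) (int j - 1) :: 'k bipoly set)"
      by (rule HF_Omega_zero_ideal[OF fat_hideal])
    moreover have "pdim (bihom_part (int i - 1) (int j) :: 'k bipoly set) = i * (j + 1)"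
      by (cases i) (simp_all add: pdim_bihom)
    moreover have "pdim (bihom_part (int i) (int j - 1) :: 'k bipoly set) = (i + 1) * j"
      by (cases j) (simp_all add: pdim_bihom)
    ultimately show "HF_Omega ?I (int i) (int j) = 4 * i * j + 2 * i + 2 * j" by (simp add: pdim_eq algebra_simps)
  qed
  have C: "\<forall>i0 j0 :: nat.
          HF ?I (int i0 - 1) (int j0) = HF ?I (int i0) (int j0)
          \<and> HF ?I (int i0) (int j0) = HF ?I (int i0) (int j0 - 1)
          \<longrightarrow> (\<forall>i j :: nat. i0 \<le> i \<and> j0 \<le> j \<longrightarrow>
                int (HF_Omega ?I (int i) (int j)) = 5 * int (HF ?I (int i) (int j)) - int (HF ?IV (int i) (int j)))"
  proof (rule allI, rule allI, rule impI)
    fix i0 j0 :: nat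
    assume h: "HF ?I (int i0 - 1) (int j0) = HF ?I (int i0) (int j0) \<and> HF ?I (int i0) (int j0) = HF ?I (int i0) (int j0 - 1)"
    show "\<forall>i j :: nat. i0 \<le> i \<and> j0 \<le> j \<longrightarrow>
                int (HF_Omega ?I (int i) (int j)) = 5 * int (HF ?I (int i) (int j)) - int (HF ?IV (int i) (int j))"
    proof (cases "X = {}")
      case True
      then show ?thesis by (simp add: fat_empty HF_UNIV HF_Omega_UNIV)
    next
      case False
      have i0: "i0 \<noteq> 0"
      proof
        assume "i0 = 0"
        then have "HF ?I 0 (int j0) = 0" using h HF_neg[of "-1" "int j0" ?I] by simp
        then show False using HF0_nonzero(1)[OF valid pos False] by simp
      qed
      have j0: "j0 \<noteq> 0"
      proof
        assume "j0 = 0"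
        then have "HF ?I (int i0) 0 = 0" using h HF_neg[of "int i0" "-1" ?I] by simp
        then show False using HF0_nonzero(2)[OF valid pos False] by simp
      qed
      obtain t where t: "\<forall>P\<in>X. fst (fst P) + t * snd (fst P) \<noteq> 0"
        using exists_t[OF assms(1), of "\<lambda>P. fst (fst P)" "\<lambda>P. snd (fst P)"] valid by (auto simp: valid_pt_def)
      obtain s where s: "\<forall>P\<in>X. fst (snd P) + s * snd (snd P) \<noteq> 0"
        using exists_t[OF assms(1), of "\<lambda>P. fst (snd P)" "\<lambda>P. snd (snd P)"] valid by (auto simp: valid_pt_def)
      let ?L = "lin X0 X1 t" and ?M = "lin Y0 Y1 s"
      have Lnz: "\<forall>P\<in>X. peval ?L P \<noteq> 0" using t by (simp add: peval_lin)
      have Mnz: "\<forall>P\<in>X. peval ?M P \<noteq> 0" using s by (simp add: peval_lin)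
      have Linj: "\<And>F. ?L * F = 0 \<Longrightarrow> F = 0" by (rule lin_inj) simp_all
      have Minj: "\<And>F. ?M * F = 0 \<Longrightarrow> F = 0" by (rule lin_inj) simp_all
      have row_iff: "HF ?I (i - 1) j = HF ?I i j \<longleftrightarrow> bihom_part i j \<subseteq> sumset ?L ?I 1 0 i j" for i j
        using stab_dim[OF valid lin_bihom(1) Lnz Linj, of m i j] by simp
      have col_iff: "HF ?I i (j - 1) = HF ?I i j \<longleftrightarrow> bihom_part i j \<subseteq> sumset ?M ?I 0 1 i j" for i j
        using stab_dim[OF valid lin_bihom(2) Mnz Minj, of m i j] by simp
      have r0: "rowst ?L ?I i0 j0" using h row_iff by (simp add: rowst_def)
      have "HF ?I (int i0) (int j0 - 1) = HF ?I (int i0) (int j0)" using h by simp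
      then have c0: "colst ?M ?I i0 j0" using col_iff by (simp add: colst_def)
      show ?thesis
      proof (intro allI impI)
        fix i j :: nat assume ij: "i0 \<le> i \<and> j0 \<le> j"
        have st: "rowst ?L ?I i j \<and> colst ?M ?I i j"
          using chain[OF fat_ideal_isideal lin_bihom(1) lin_bihom(2) r0 c0] ij by blast
        have e1: "HF ?I (int i - 1) (int j) = HF ?I (int i) (int j)" using st row_iff by (simp add: rowst_def)
        have e2: "HF ?I (int i) (int j - 1) = HF ?I (int i) (int j)" using st col_iff by (simp add: colst_def)
        have i1: "1 \<le> int i" using ij i0 by simp
        show "int (HF_Omega ?I (int i) (int j)) = 5 * int (HF ?I (int i) (int j)) - int (HF ?IV (int i) (int j))"
          using HF_Omega_main[OF valid pos i1, of j] e1 e2 by simp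
      qed
    qed
  qed
  show ?thesis using A B C by blast
qed


end
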